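(* For the algorithm OptPess-PrimalDual, with probability at least $1-\delta$, $$\sum_{k=C''}^K\left(V_1^{\pi^{\epsilon_k,*}}(\mu;r,P)-\hat V_1^{\pi^{\epsilon_k,*}}(\mu;\tilde r^k,\hat P^k)\right)\le0.$$
   Context: Episodic constrained MDP. $\mathcal S,\mathcal A$ finite, $H\ge1$ integer. For each $h\in[H]$, $(s,a)$: unknown transition distribution $P_h(\cdot\mid s,a)$, unknown mean reward $r_h(s,a)\in[0,1]$, unknown mean cost $c_h(s,a)\in[0,1]$. Known initial distribution $\mu$, threshold $\tau\in(0,H]$. Policies are randomized Markov. $V_h^\pi(s;g,P'):=\mathbb E_{P',\pi}[\sum_{t=h}^Hg_t(S_t,A_t)\mid S_h=s]$, $V_1^\pi(\mu;g,P'):=\mathbb E_{S_1\sim\mu}V_1^\pi(S_1;g,P')$. There exists a policy $\pi^0$ with $V_1^{\pi^0}(\mu;c,P)=c^0<\tau$, $c^0$ known. Interaction over $K$ episodes: in episode $k$, $\pi^k$ depends only on previous data; $S_1^k\sim\mu$, $A_h^k\sim\pi_h^k(\cdot\mid S_h^k)$, observed $R_h^k=r_h(S_h^k,A_h^k)+\text{noise}$, $C_h^k=c_h(S_h^k,A_h^k)+\text{noise}$, $S_{h+1}^k\sim P_h(\cdot\mid S_h^k,A_h^k)$; $\mathcal F_k$ generated by all observations of episodes $1..k$; noises conditionally independent, zero mean, $\mathbb E[e^{\lambda\xi}\mid\mathcal F_{k-1}]\le e^{\lambda^2/4}$ for all real $\lambda$. Estimates: $N_h^k(s,a)$ = visits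 of $(s,a)$ at step $h$ in episodes $1..k-1$; $\hat P_h^k,\hat r_h^k,\hat c_h^k$ empirical transition frequencies and means (denominator $N_h^k(s,a)\vee1$); $Z:=\log(16|\mathcal S|^2|\mathcal A|HK/\delta)$, $\beta_h^k(s,a):=\sqrt{Z/(N_h^k(s,a)\vee1)}$, $\delta\in(0,1)$. OptPess-PrimalDual: $\delta'=\delta/(16|\mathcal S|^2|\mathcal A|H)$, $\epsilon_k:=5H^2\sqrt{|\mathcal S|^3|\mathcal A|}(\log\frac{k}{\delta'}+1)/\sqrt{k\log\frac{k}{\delta'}}$, $\eta^k:=(\tau-c^0)H\sqrt k$; $\tilde r_h^k:=\hat r_h^k+(1+H|\mathcal S|)\beta_h^k$, $\tilde c_h^k:=\hat c_h^k-(1+H|\mathcal S|)\beta_h^k$; $\hat V_1^\pi(\mu;\tilde r^k,\hat P^k):=\min\{H,V_1^\pi(\mu;\tilde r^k,\hat P^k)\}$, $\hat V_1^\pi(\mu;\tilde c^k,\hat P^k):=\max\{0,V_1^\pi(\mu;\tilde c^k,\hat P^k)\}$. $\lambda^1=0$; $\pi^k\in\arg\max_\pi\hat V_1^\pi(\mu;\tilde r^k,\hat P^k)-\frac{\lambda^k}{\eta^k}(\hat V_1^\pi(\mu;\tilde c^k,\hat P^k)-\tau)$; $\lambda^{k+1}=(\lambda^k+\hat V_1^{\pi^k}(\mu;\tilde c^k,\hat P^k)+\epsilon_k-\tau)_+$. $C''$ is the smallest positive integer such that $\epsilon_k\le(\tau-c^0)/2$ for all $k\ge C''$. For $k\ge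 C''$, $\pi^{\epsilon_k,*}$ is an optimal policy of $\max_\pi V_1^\pi(\mu;r,P)$ s.t. $V_1^\pi(\mu;c,P)+\epsilon_k\le\tau$. *)

theory Defs
  imports "HOL-Probability.Probability"
begin

type_synonym ('s, 'a) policy = "nat \<Rightarrow> 's \<Rightarrow> 'a pmf"

text \<open>Backward (Bellman) recursion; m = number of remaining steps.
  Works for the (possibly substochastic) empirical kernel as well.\<close>
primrec Vaux :: "nat \<Rightarrow> ('s::finite, 'a::finite) policy \<Rightarrow> (nat \<Rightarrow> 's \<Rightarrow> 'a \<Rightarrow> real)
    \<Rightarrow> (nat \<Rightarrow> 's \<Rightarrow> 'a \<Rightarrow> 's \<Rightarrow> real) \<Rightarrow> nat \<Rightarrow> 's \<Rightarrow> real" where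
  "Vaux 0 \<pi> g P h s = 0"
| "Vaux (Suc m) \<pi> g P h s =
     (\<Sum>a\<in>UNIV. pmf (\<pi> h s) a * (g h s a + (\<Sum>s'\<in>UNIV. P h s a s' * Vaux m \<pi> g P (Suc h) s')))"

text \<open>V_h^pi(s; g, P') = E[ sum_{t=h}^H g_t(S_t,A_t) | S_h = s ].\<close>
definition Vh :: "nat \<Rightarrow> ('s::finite, 'a::finite) policy \<Rightarrow> (nat \<Rightarrow> 's \<Rightarrow> 'a \<Rightarrow> real)
    \<Rightarrow> (nat \<Rightarrow> 's \<Rightarrow> 'a \<Rightarrow> 's \<Rightarrow> real) \<Rightarrow> nat \<Rightarrow> 's \<Rightarrow> real" where
  "Vh H \<pi> g P h s = Vaux (H + 1 - h) \<pi> g P h s"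

definition V1 :: "nat \<Rightarrow> ('s::finite, 'a::finite) policy \<Rightarrow> (nat \<Rightarrow> 's \<Rightarrow> 'a \<Rightarrow> real)
    \<Rightarrow> (nat \<Rightarrow> 's \<Rightarrow> 'a \<Rightarrow> 's \<Rightarrow> real) \<Rightarrow> 's pmf \<Rightarrow> real" where
  "V1 H \<pi> g P \<mu> = (\<Sum>s\<in>UNIV. pmf \<mu> s * Vh H \<pi> g P 1 s)"

definition kern :: "(nat \<Rightarrow> 's \<Rightarrow> 'a \<Rightarrow> 's pmf) \<Rightarrow> nat \<Rightarrow> 's \<Rightarrow> 'a \<Rightarrow> 's \<Rightarrow> real" where
  "kern P h s a s' = pmf (P h s a) s'"

section \<open>Empirical estimates (Sd, Ad, Gd: observed data, indexed by episode and step)\<close>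

definition Ncnt :: "(nat \<Rightarrow> nat \<Rightarrow> 's) \<Rightarrow> (nat \<Rightarrow> nat \<Rightarrow> 'a) \<Rightarrow> nat \<Rightarrow> nat \<Rightarrow> 's \<Rightarrow> 'a \<Rightarrow> nat" where
  "Ncnt Sd Ad k h s a = card {j \<in> {1..<k}. Sd j h = s \<and> Ad j h = a}"

definition Phat :: "(nat \<Rightarrow> nat \<Rightarrow> 's) \<Rightarrow> (nat \<Rightarrow> nat \<Rightarrow> 'a) \<Rightarrow> nat \<Rightarrow> nat \<Rightarrow> 's \<Rightarrow> 'a \<Rightarrow> 's \<Rightarrow> real" where
  "Phat Sd Ad k h s a s' =
     real (card {j \<in> {1..<k}. Sd j h = s \<and> Ad j h = a \<and> Sd j (Suc h) = s'})
     / real (max 1 (Ncnt Sd Ad k h s a))"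

definition ghat :: "(nat \<Rightarrow> nat \<Rightarrow> real) \<Rightarrow> (nat \<Rightarrow> nat \<Rightarrow> 's) \<Rightarrow> (nat \<Rightarrow> nat \<Rightarrow> 'a) \<Rightarrow> nat \<Rightarrow> nat \<Rightarrow> 's \<Rightarrow> 'a \<Rightarrow> real" where
  "ghat Gd Sd Ad k h s a =
     (\<Sum>j \<in> {j \<in> {1..<k}. Sd j h = s \<and> Ad j h = a}. Gd j h)
     / real (max 1 (Ncnt Sd Ad k h s a))"

definition beta :: "nat \<Rightarrow> nat \<Rightarrow> real \<Rightarrow> (nat \<Rightarrow> nat \<Rightarrow> 's::finite) \<Rightarrow> (nat \<Rightarrow> nat \<Rightarrow> 'a::finite)
    \<Rightarrow> nat \<Rightarrow> nat \<Rightarrow> 's \<Rightarrow> 'a \<Rightarrow> real" where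
  "beta H K \<delta> Sd Ad k h s a =
     sqrt (ln (16 * real CARD('s) ^ 2 * real CARD('a) * real H * real K / \<delta>)
           / real (max 1 (Ncnt Sd Ad k h s a)))"

definition rtilde :: "nat \<Rightarrow> nat \<Rightarrow> real \<Rightarrow> (nat \<Rightarrow> nat \<Rightarrow> 's::finite) \<Rightarrow> (nat \<Rightarrow> nat \<Rightarrow> 'a::finite)
    \<Rightarrow> (nat \<Rightarrow> nat \<Rightarrow> real) \<Rightarrow> nat \<Rightarrow> nat \<Rightarrow> 's \<Rightarrow> 'a \<Rightarrow> real" where
  "rtilde H K \<delta> Sd Ad Rd k h s a =
     ghat Rd Sd Ad k h s a + (1 + real H * real CARD('s)) * beta H K \<delta> Sd Ad k h s a"

definition ctilde :: "nat \<Rightarrow> nat \<Rightarrow> real \<Rightarrow> (nat \<Rightarrow> nat \<Rightarrow> 's::finite) \<Rightarrow> (nat \<Rightarrow> nat \<Rightarrow> 'a::finite)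
    \<Rightarrow> (nat \<Rightarrow> nat \<Rightarrow> real) \<Rightarrow> nat \<Rightarrow> nat \<Rightarrow> 's \<Rightarrow> 'a \<Rightarrow> real" where
  "ctilde H K \<delta> Sd Ad Cd k h s a =
     ghat Cd Sd Ad k h s a - (1 + real H * real CARD('s)) * beta H K \<delta> Sd Ad k h s a"

definition Vr_hat :: "nat \<Rightarrow> nat \<Rightarrow> real \<Rightarrow> (nat \<Rightarrow> nat \<Rightarrow> 's::finite) \<Rightarrow> (nat \<Rightarrow> nat \<Rightarrow> 'a::finite)
    \<Rightarrow> (nat \<Rightarrow> nat \<Rightarrow> real) \<Rightarrow> 's pmf \<Rightarrow> nat \<Rightarrow> ('s, 'a) policy \<Rightarrow> real" where
  "Vr_hat H K \<delta> Sd Ad Rd \<mu> k \<pi> =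
     min (real H) (V1 H \<pi> (rtilde H K \<delta> Sd Ad Rd k) (Phat Sd Ad k) \<mu>)"

definition Vc_hat :: "nat \<Rightarrow> nat \<Rightarrow> real \<Rightarrow> (nat \<Rightarrow> nat \<Rightarrow> 's::finite) \<Rightarrow> (nat \<Rightarrow> nat \<Rightarrow> 'a::finite)
    \<Rightarrow> (nat \<Rightarrow> nat \<Rightarrow> real) \<Rightarrow> 's pmf \<Rightarrow> nat \<Rightarrow> ('s, 'a) policy \<Rightarrow> real" where
  "Vc_hat H K \<delta> Sd Ad Cd \<mu> k \<pi> =
     max 0 (V1 H \<pi> (ctilde H K \<delta> Sd Ad Cd k) (Phat Sd Ad k) \<mu>)"

definition eps :: "nat \<Rightarrow> nat \<Rightarrow> nat \<Rightarrow> real \<Rightarrow> nat \<Rightarrow> real" where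
  "eps nS nA H \<delta> k =
     (let \<delta>' = \<delta> / (16 * real nS ^ 2 * real nA * real H) in
      5 * real H ^ 2 * sqrt (real nS ^ 3 * real nA) * (ln (real k / \<delta>') + 1)
      / sqrt (real k * ln (real k / \<delta>')))"

definition eta :: "real \<Rightarrow> real \<Rightarrow> nat \<Rightarrow> nat \<Rightarrow> real" where
  "eta \<tau> c0 H k = (\<tau> - c0) * real H * sqrt (real k)"

definition Cpp :: "nat \<Rightarrow> nat \<Rightarrow> nat \<Rightarrow> real \<Rightarrow> real \<Rightarrow> real \<Rightarrow> nat" where
  "Cpp nS nA H \<delta> \<tau> c0 = (LEAST n::nat. 0 < n \<and> (\<forall>k\<ge>n. eps nS nA H \<delta> k \<le> (\<tau> - c0) / 2))"

primrec lam :: "nat \<Rightarrow> nat \<Rightarrow> real \<Rightarrow> real \<Rightarrow> (nat \<Rightarrow> nat \<Rightarrow> 's::finite) \<Rightarrow> (nat \<Rightarrow> nat \<Rightarrow> 'a::finite)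
    \<Rightarrow> (nat \<Rightarrow> nat \<Rightarrow> real) \<Rightarrow> 's pmf \<Rightarrow> (nat \<Rightarrow> ('s, 'a) policy) \<Rightarrow> nat \<Rightarrow> real" where
  "lam H K \<delta> \<tau> Sd Ad Cd \<mu> pols 0 = 0"
| "lam H K \<delta> \<tau> Sd Ad Cd \<mu> pols (Suc k) =
     (if k = 0 then 0
      else max 0 (lam H K \<delta> \<tau> Sd Ad Cd \<mu> pols k + Vc_hat H K \<delta> Sd Ad Cd \<mu> k (pols k)
                  + eps CARD('s) CARD('a) H \<delta> k - \<tau>))"

definition alg_obj :: "nat \<Rightarrow> nat \<Rightarrow> real \<Rightarrow> real \<Rightarrow> real \<Rightarrow> (nat \<Rightarrow> nat \<Rightarrow> 's::finite)
    \<Rightarrow> (nat \<Rightarrow> nat \<Rightarrow> 'a::finite) \<Rightarrow> (nat \<Rightarrow> nat \<Rightarrow> real) \<Rightarrow> (nat \<Rightarrow> nat \<Rightarrow> real) \<Rightarrow> 's pmf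
    \<Rightarrow> (nat \<Rightarrow> ('s, 'a) policy) \<Rightarrow> nat \<Rightarrow> ('s, 'a) policy \<Rightarrow> real" where
  "alg_obj H K \<delta> \<tau> c0 Sd Ad Rd Cd \<mu> pols k \<pi> =
     Vr_hat H K \<delta> Sd Ad Rd \<mu> k \<pi>
     - lam H K \<delta> \<tau> Sd Ad Cd \<mu> pols k / eta \<tau> c0 H k * (Vc_hat H K \<delta> Sd Ad Cd \<mu> k \<pi> - \<tau>)"

text \<open>Within an episode observations are ordered S_1, A_1, R_1, C_1, S_2, A_2, ...\<close>
datatype otype = OS | OA | OR | OC

definition opos :: "nat \<Rightarrow> otype \<Rightarrow> nat" where
  "opos i t = 4 * i + (case t of OS \<Rightarrow> 0 | OA \<Rightarrow> 1 | OR \<Rightarrow> 2 | OC \<Rightarrow> 3)"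

definition ovalid :: "nat \<Rightarrow> nat \<Rightarrow> otype \<Rightarrow> bool" where
  "ovalid H i t = (if t = OS then 1 \<le> i \<and> i \<le> H + 1 else 1 \<le> i \<and> i \<le> H)"

definition obs_gen :: "'x measure \<Rightarrow> (nat \<Rightarrow> nat \<Rightarrow> 'x \<Rightarrow> 's) \<Rightarrow> (nat \<Rightarrow> nat \<Rightarrow> 'x \<Rightarrow> 'a)
    \<Rightarrow> (nat \<Rightarrow> nat \<Rightarrow> 'x \<Rightarrow> real) \<Rightarrow> (nat \<Rightarrow> nat \<Rightarrow> 'x \<Rightarrow> real) \<Rightarrow> nat \<Rightarrow> nat \<Rightarrow> otype \<Rightarrow> 'x set set" where
  "obs_gen M S A R C j i t = (case t of
       OS \<Rightarrow> {S j i -` {s} \<inter> space M | s. True}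
     | OA \<Rightarrow> {A j i -` {a} \<inter> space M | a. True}
     | OR \<Rightarrow> {R j i -` B \<inter> space M | B. B \<in> sets borel}
     | OC \<Rightarrow> {C j i -` B \<inter> space M | B. B \<in> sets borel})"

text \<open>Sigma-algebra generated by all observations of episodes 1..k-1 and by the
  observations of episode k strictly before position p.  hist_sigma .. k 0 is F_{k-1}.\<close>
definition hist_sigma :: "'x measure \<Rightarrow> nat \<Rightarrow> (nat \<Rightarrow> nat \<Rightarrow> 'x \<Rightarrow> 's) \<Rightarrow> (nat \<Rightarrow> nat \<Rightarrow> 'x \<Rightarrow> 'a)
    \<Rightarrow> (nat \<Rightarrow> nat \<Rightarrow> 'x \<Rightarrow> real) \<Rightarrow> (nat \<Rightarrow> nat \<Rightarrow> 'x \<Rightarrow> real) \<Rightarrow> nat \<Rightarrow> nat \<Rightarrow> 'x measure" where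
  "hist_sigma M H S A R C k p = sigma (space M)
     (\<Union>{obs_gen M S A R C j i t | j i t.
          1 \<le> j \<and> ovalid H i t \<and> (j < k \<or> (j = k \<and> opos i t < p))})"

end

theory Submission
  imports Defs
begin



lemma vaux_bounds:
  fixes r :: "nat \<Rightarrow> 's::finite \<Rightarrow> 'a::finite \<Rightarrow> real"
  assumes "\<forall>h'\<in>{h..<h+m}. \<forall>s a. 0 \<le> r h' s a \<and> r h' s a \<le> 1 \<and> (\<forall>s'. 0 \<le> P h' s a s') \<and> (\<Sum>s'\<in>UNIV. P h' s a s') = 1"
  shows "0 \<le> Vaux m \<pi> r P h s \<and> Vaux m \<pi> r P h s \<le> real m"
  using assms
proof (induction m arbitrary: h s)
  case 0
  then show ?case by simp
next
  case (Suc m)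
  have IH: "0 \<le> Vaux m \<pi> r P (Suc h) s' \<and> Vaux m \<pi> r P (Suc h) s' \<le> real m" for s'
    using Suc.IH[of "Suc h" s'] Suc.prems by auto
  have hh: "h \<in> {h..<h+Suc m}" by simp
  have inner: "0 \<le> r h s a + (\<Sum>s'\<in>UNIV. P h s a s' * Vaux m \<pi> r P (Suc h) s')
      \<and> r h s a + (\<Sum>s'\<in>UNIV. P h s a s' * Vaux m \<pi> r P (Suc h) s') \<le> 1 + real m" for a
  proof -
    have p: "0 \<le> r h s a" "r h s a \<le> 1" "\<And>s'. 0 \<le> P h s a s'" "(\<Sum>s'\<in>UNIV. P h s a s') = 1"
      using Suc.prems hh by blast+
    have "(\<Sum>s'\<in>UNIV. P h s a s' * Vaux m \<pi> r P (Suc h) s') \<le> (\<Sum>s'\<in>UNIV. P h s a s' * real m)"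
      by (intro sum_mono mult_left_mono) (use IH p in auto)
    also have "\<dots> = real m" using p(4) by (simp add: sum_distrib_right[symmetric])
    finally have 1: "(\<Sum>s'\<in>UNIV. P h s a s' * Vaux m \<pi> r P (Suc h) s') \<le> real m" .
    have 2: "0 \<le> (\<Sum>s'\<in>UNIV. P h s a s' * Vaux m \<pi> r P (Suc h) s')"
      by (intro sum_nonneg mult_nonneg_nonneg) (use IH p in auto)
    show ?thesis using 1 2 p by linarith
  qed
  have s1: "(\<Sum>a\<in>UNIV. pmf (\<pi> h s) a) = 1" by (simp add: sum_pmf_eq_1)
  have "Vaux (Suc m) \<pi> r P h s \<le> (\<Sum>a\<in>UNIV. pmf (\<pi> h s) a * (1 + real m))"
    by (simp only: Vaux.simps, intro sum_mono mult_left_mono) (use inner in auto)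
  also have "\<dots> = 1 + real m" using s1 by (simp add: sum_distrib_right[symmetric])
  finally have up: "Vaux (Suc m) \<pi> r P h s \<le> real (Suc m)" by simp
  have lo: "0 \<le> Vaux (Suc m) \<pi> r P h s"
    by (simp only: Vaux.simps, intro sum_nonneg mult_nonneg_nonneg) (use inner in auto)
  show ?case using up lo by blast
qed

lemma vaux_opt:
  fixes r g :: "nat \<Rightarrow> 's::finite \<Rightarrow> 'a::finite \<Rightarrow> real"
  assumes "\<forall>h'\<in>{h..<h+m}. \<forall>s a. 0 \<le> r h' s a \<and> r h' s a \<le> 1 \<and> (\<forall>s'. 0 \<le> P h' s a s') \<and> (\<Sum>s'\<in>UNIV. P h' s a s') = 1
      \<and> (\<forall>s'. 0 \<le> Q h' s a s') \<and> C * (\<Sum>s'\<in>UNIV. max 0 (P h' s a s' - Q h' s a s')) \<le> g h' s a - r h' s a"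
    and "real m \<le> C"
  shows "Vaux m \<pi> r P h s \<le> Vaux m \<pi> g Q h s"
  using assms
proof (induction m arbitrary: h s)
  case 0
  then show ?case by simp
next
  case (Suc m)
  have IH: "Vaux m \<pi> r P (Suc h) s' \<le> Vaux m \<pi> g Q (Suc h) s'" for s'
    using Suc.IH[of "Suc h" s'] Suc.prems by auto
  have B: "0 \<le> Vaux m \<pi> r P (Suc h) s' \<and> Vaux m \<pi> r P (Suc h) s' \<le> real m" for s'
    by (rule vaux_bounds) (use Suc.prems in auto)
  have hh: "h \<in> {h..<h+Suc m}" by simp
  have inner: "r h s a + (\<Sum>s'\<in>UNIV. P h s a s' * Vaux m \<pi> r P (Suc h) s')
      \<le> g h s a + (\<Sum>s'\<in>UNIV. Q h s a s' * Vaux m \<pi> g Q (Suc h) s')" for a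
  proof -
    have p: "\<And>s'. 0 \<le> Q h s a s'" "C * (\<Sum>s'\<in>UNIV. max 0 (P h s a s' - Q h s a s')) \<le> g h s a - r h s a"
      using Suc.prems hh by blast+
    have "(\<Sum>s'\<in>UNIV. P h s a s' * Vaux m \<pi> r P (Suc h) s') - (\<Sum>s'\<in>UNIV. Q h s a s' * Vaux m \<pi> r P (Suc h) s')
        = (\<Sum>s'\<in>UNIV. (P h s a s' - Q h s a s') * Vaux m \<pi> r P (Suc h) s')"
      by (simp add: sum_subtractf[symmetric] algebra_simps)
    also have "\<dots> \<le> (\<Sum>s'\<in>UNIV. max 0 (P h s a s' - Q h s a s') * C)"
    proof (intro sum_mono)
      fix s'
      have "(P h s a s' - Q h s a s') * Vaux m \<pi> r P (Suc h) s' \<le> max 0 (P h s a s' - Q h s a s') * Vaux m \<pi> r P (Suc h) s'"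
        by (intro mult_right_mono) (use B in auto)
      also have "\<dots> \<le> max 0 (P h s a s' - Q h s a s') * C"
      proof (intro mult_left_mono)
        show "Vaux m \<pi> r P (Suc h) s' \<le> C" using B[of s'] Suc.prems(2) by simp
      qed simp
      finally show "(P h s a s' - Q h s a s') * Vaux m \<pi> r P (Suc h) s' \<le> max 0 (P h s a s' - Q h s a s') * C" .
    qed
    also have "\<dots> = C * (\<Sum>s'\<in>UNIV. max 0 (P h s a s' - Q h s a s'))"
      by (simp add: sum_distrib_left mult.commute)
    finally have 1: "(\<Sum>s'\<in>UNIV. P h s a s' * Vaux m \<pi> r P (Suc h) s') - (\<Sum>s'\<in>UNIV. Q h s a s' * Vaux m \<pi> r P (Suc h) s')
        \<le> C * (\<Sum>s'\<in>UNIV. max 0 (P h s a s' - Q h s a s'))" .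
    have 2: "(\<Sum>s'\<in>UNIV. Q h s a s' * Vaux m \<pi> r P (Suc h) s') \<le> (\<Sum>s'\<in>UNIV. Q h s a s' * Vaux m \<pi> g Q (Suc h) s')"
      by (intro sum_mono mult_left_mono) (use IH p in auto)
    show ?thesis using 1 2 p by linarith
  qed
  show ?case
    by (simp only: Vaux.simps, intro sum_mono mult_left_mono) (use inner in auto)
qed



lemma card_filter_real:
  "finite A \<Longrightarrow> real (card {j\<in>A. P j}) = (\<Sum>j\<in>A. if P j then 1 else 0)"
  by (simp add: sum.inter_filter[symmetric])

lemma conc:
  fixes M :: "'x measure" and I :: "nat \<Rightarrow> 'x \<Rightarrow> bool" and X :: "nat \<Rightarrow> 'x \<Rightarrow> real"
    and G :: "nat \<Rightarrow> 'x measure" and K n :: nat and Z :: real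
  assumes M: "prob_space M"
   and IM: "\<And>j. Measurable.pred M (I j)"
   and XM: "\<And>j. X j \<in> borel_measurable M"
   and Gsub: "\<And>j. j\<in>{1..<K} \<Longrightarrow> subalgebra M (G j)"
   and IG: "\<And>j i. j\<in>{1..<K} \<Longrightarrow> i\<in>{1..j} \<Longrightarrow> Measurable.pred (G j) (I i)"
   and XG: "\<And>j i. j\<in>{1..<K} \<Longrightarrow> i\<in>{1..<j} \<Longrightarrow> X i \<in> borel_measurable (G j)"
   and mgf: "\<And>j f \<mu>. j\<in>{1..<K} \<Longrightarrow> f \<in> borel_measurable (G j) \<Longrightarrow>
       (\<integral>\<^sup>+\<omega>. f \<omega> * ennreal (exp (\<mu> * X j \<omega>)) \<partial>M) \<le> (\<integral>\<^sup>+\<omega>. f \<omega> * ennreal (exp (\<mu>\<^sup>2/4)) \<partial>M)"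
   and n: "1 \<le> n" and Z: "0 < Z"
  shows "\<exists>B\<in>sets M. {\<omega>\<in>space M. \<exists>k\<in>{1..K}. card {j\<in>{1..<k}. I j \<omega>} = n
            \<and> (\<Sum>j\<in>{j\<in>{1..<k}. I j \<omega>}. X j \<omega>) < - sqrt (real n * Z)} \<subseteq> B
          \<and> measure M B \<le> exp (-Z)"
proof -
  interpret prob_space M by (fact M)
  define \<mu> where "\<mu> = -2 * sqrt (Z / real n)"
  define c where "c j \<omega> = (\<Sum>i\<in>{1..<j}. if I i \<omega> then 1 else 0::real)" for j \<omega>
  define J where "J j \<omega> = (I j \<omega> \<and> c j \<omega> < real n)" for j \<omega>
  define T where "T k \<omega> = (\<Sum>j\<in>{1..<k}. if J j \<omega> then \<mu> * X j \<omega> - \<mu>\<^sup>2/4 else 0)" for k \<omega>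
  define W where "W k \<omega> = exp (T k \<omega>)" for k \<omega>
  have cN: "c j \<in> borel_measurable N" if "\<And>i. i\<in>{1..<j} \<Longrightarrow> Measurable.pred N (I i)" for N j
    unfolding c_def using that by (intro borel_measurable_sum measurable_If) auto
  have JN: "Measurable.pred N (J j)" if "\<And>i. i\<in>{1..j} \<Longrightarrow> Measurable.pred N (I i)" "1 \<le> j" for N j
  proof -
    have [measurable]: "c j \<in> borel_measurable N" using that by (intro cN) auto
    have [measurable]: "Measurable.pred N (I j)" using that by auto
    show ?thesis unfolding J_def by measurable
  qed
  have TN: "T k \<in> borel_measurable N" if "\<And>i. i\<in>{1..<k} \<Longrightarrow> Measurable.pred N (I i)"
     "\<And>i. i\<in>{1..<k} \<Longrightarrow> X i \<in> borel_measurable N" for N k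
    unfolding T_def
  proof (rule borel_measurable_sum)
    fix j assume j: "j \<in> {1..<k}"
    have [measurable]: "Measurable.pred N (J j)" using j that by (intro JN) auto
    have [measurable]: "X j \<in> borel_measurable N" using j that by auto
    show "(\<lambda>x. if J j x then \<mu> * X j x - \<mu>\<^sup>2 / 4 else 0) \<in> borel_measurable N" by measurable
  qed
  have WM: "(\<lambda>\<omega>. W k \<omega>) \<in> borel_measurable M" for k
  proof -
    have [measurable]: "T k \<in> borel_measurable M" by (rule TN) (use IM XM in auto)
    show ?thesis unfolding W_def by measurable
  qed
  have JM: "Measurable.pred M (J k)" if "1 \<le> k" for k using JN[of k M] IM that by auto
  have step: "(\<integral>\<^sup>+\<omega>. ennreal (W (Suc k) \<omega>) \<partial>M) \<le> (\<integral>\<^sup>+\<omega>. ennreal (W k \<omega>) \<partial>M)" if k: "k\<in>{1..<K}" for k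
  proof -
    have [measurable]: "T k \<in> borel_measurable (G k)" by (rule TN) (use IG[OF k] XG[OF k] in auto)
    have WG[measurable]: "(\<lambda>\<omega>. W k \<omega>) \<in> borel_measurable (G k)"
      unfolding W_def by measurable
    have JG[measurable]: "Measurable.pred (G k) (J k)" using JN[of k "G k"] IG[OF k] k by auto
    define f where "f \<omega> = ennreal (W k \<omega> * (if J k \<omega> then exp (-\<mu>\<^sup>2/4) else 0))" for \<omega>
    define A where "A \<omega> = ennreal (W k \<omega> * (if J k \<omega> then 0 else 1))" for \<omega>
    have fG: "f \<in> borel_measurable (G k)" unfolding f_def by measurable
    have [measurable]: "Measurable.pred M (J k)" using JM k by auto
    note WM[measurable] XM[measurable]
    have fM[measurable]: "f \<in> borel_measurable M" unfolding f_def by measurable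
    have AM[measurable]: "A \<in> borel_measurable M" unfolding A_def by measurable
    have Wsuc: "W (Suc k) \<omega> = W k \<omega> * (if J k \<omega> then exp (\<mu> * X k \<omega> - \<mu>\<^sup>2/4) else 1)" for \<omega>
      using k by (simp add: W_def T_def sum.atLeastLessThan_Suc exp_add)
    have e1: "ennreal (W (Suc k) \<omega>) = A \<omega> + f \<omega> * ennreal (exp (\<mu> * X k \<omega>))" for \<omega>
    proof (cases "J k \<omega>")
      case True
      have "W (Suc k) \<omega> = (W k \<omega> * exp (-\<mu>\<^sup>2/4)) * exp (\<mu> * X k \<omega>)"
      proof -
        have "exp (\<mu> * X k \<omega> - \<mu>\<^sup>2/4) = exp (-\<mu>\<^sup>2/4) * exp (\<mu> * X k \<omega>)"
          by (simp add: exp_add[symmetric])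
        then show ?thesis using True by (simp add: Wsuc)
      qed
      then show ?thesis using True
        by (simp add: A_def f_def W_def ennreal_mult[symmetric])
    next
      case False
      then show ?thesis by (simp add: A_def f_def Wsuc)
    qed
    have e2: "A \<omega> + f \<omega> * ennreal (exp (\<mu>\<^sup>2/4)) = ennreal (W k \<omega>)" for \<omega>
    proof (cases "J k \<omega>")
      case True
      have "W k \<omega> = (W k \<omega> * exp (-\<mu>\<^sup>2/4)) * exp (\<mu>\<^sup>2/4)"
        by (simp add: exp_minus field_simps)
      then show ?thesis using True
        by (simp add: A_def f_def W_def ennreal_mult[symmetric])
    next
      case False
      then show ?thesis by (simp add: A_def f_def)
    qed
    have "(\<integral>\<^sup>+\<omega>. ennreal (W (Suc k) \<omega>) \<partial>M) = (\<integral>\<^sup>+\<omega>. A \<omega> + f \<omega> * ennreal (exp (\<mu> * X k \<omega>)) \<partial>M)"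
      by (simp add: e1)
    also have "\<dots> = (\<integral>\<^sup>+\<omega>. A \<omega> \<partial>M) + (\<integral>\<^sup>+\<omega>. f \<omega> * ennreal (exp (\<mu> * X k \<omega>)) \<partial>M)"
      by (intro nn_integral_add) measurable
    also have "\<dots> \<le> (\<integral>\<^sup>+\<omega>. A \<omega> \<partial>M) + (\<integral>\<^sup>+\<omega>. f \<omega> * ennreal (exp (\<mu>\<^sup>2/4)) \<partial>M)"
      by (intro add_left_mono mgf[OF k fG])
    also have "\<dots> = (\<integral>\<^sup>+\<omega>. A \<omega> + f \<omega> * ennreal (exp (\<mu>\<^sup>2/4)) \<partial>M)"
      by (intro nn_integral_add[symmetric]) measurable
    also have "\<dots> = (\<integral>\<^sup>+\<omega>. ennreal (W k \<omega>) \<partial>M)" by (simp add: e2)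
    finally show ?thesis .
  qed
  have bound: "(\<integral>\<^sup>+\<omega>. ennreal (W k \<omega>) \<partial>M) \<le> 1" if "k\<in>{1..K}" for k
    using that
  proof (induction k)
    case 0 then show ?case by simp
  next
    case (Suc k)
    show ?case
    proof (cases "k = 0")
      case True
      then show ?thesis by (simp add: W_def T_def emeasure_space_1)
    next
      case False
      then have "k \<in> {1..<K}" "k \<in> {1..K}" using Suc.prems by auto
      then show ?thesis using step Suc.IH order_trans by blast
    qed
  qed
  have WK: "(\<integral>\<^sup>+\<omega>. ennreal (W K \<omega>) \<partial>M) \<le> 1"
  proof (cases "K = 0")
    case True then show ?thesis by (simp add: W_def T_def emeasure_space_1)
  next
    case False then show ?thesis by (intro bound) auto
  qed
  define B where "B = {x\<in>space M. 1 \<le> ennreal (exp (-Z)) * ennreal (W K x)}"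
  have BM: "B \<in> sets M" unfolding B_def using WM by measurable
  have "emeasure M B \<le> ennreal (exp (-Z)) * set_nn_integral M (space M) (\<lambda>x. ennreal (W K x))"
    unfolding B_def
  proof (intro nn_integral_Markov_inequality)
    note WM[measurable]
    show "(\<lambda>x. ennreal (W K x) * indicator (space M) x) \<in> borel_measurable M" by measurable
  qed simp
  also have "set_nn_integral M (space M) (\<lambda>x. ennreal (W K x)) = (\<integral>\<^sup>+\<omega>. ennreal (W K \<omega>) \<partial>M)"
    by (intro nn_integral_cong) (simp add: indicator_def)
  also have "ennreal (exp (-Z)) * \<dots> \<le> ennreal (exp (-Z)) * 1"
    by (intro mult_left_mono WK) simp
  finally have "emeasure M B \<le> ennreal (exp (-Z))" by simp
  then have Bmeas: "measure M B \<le> exp (-Z)"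
    using BM by (simp add: emeasure_eq_measure ennreal_le_iff)
  have npos: "0 < real n" using n by simp
  have sub: "{\<omega>\<in>space M. \<exists>k\<in>{1..K}. card {j\<in>{1..<k}. I j \<omega>} = n
            \<and> (\<Sum>j\<in>{j\<in>{1..<k}. I j \<omega>}. X j \<omega>) < - sqrt (real n * Z)} \<subseteq> B"
  proof
    fix \<omega> assume "\<omega> \<in> {\<omega>\<in>space M. \<exists>k\<in>{1..K}. card {j\<in>{1..<k}. I j \<omega>} = n
            \<and> (\<Sum>j\<in>{j\<in>{1..<k}. I j \<omega>}. X j \<omega>) < - sqrt (real n * Z)}"
    then obtain k where \<omega>: "\<omega> \<in> space M" and k: "k \<in> {1..K}" and cn: "card {j\<in>{1..<k}. I j \<omega>} = n"
      and Sl: "(\<Sum>j\<in>{j\<in>{1..<k}. I j \<omega>}. X j \<omega>) < - sqrt (real n * Z)" by blast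
    have cj: "c j \<omega> = real (card {i\<in>{1..<j}. I i \<omega>})" for j
      unfolding c_def by (rule card_filter_real[symmetric]) simp
    have seteq: "{j\<in>{1..<K}. J j \<omega>} = {j\<in>{1..<k}. I j \<omega>}"
    proof
      show "{j\<in>{1..<K}. J j \<omega>} \<subseteq> {j\<in>{1..<k}. I j \<omega>}"
      proof
        fix j assume j: "j \<in> {j\<in>{1..<K}. J j \<omega>}"
        have "j < k"
        proof (rule ccontr)
          assume "\<not> j < k"
          then have "{i\<in>{1..<k}. I i \<omega>} \<subseteq> {i\<in>{1..<j}. I i \<omega>}" by auto
          then have "card {i\<in>{1..<k}. I i \<omega>} \<le> card {i\<in>{1..<j}. I i \<omega>}" by (intro card_mono) simp_all
          then have "n \<le> card {i\<in>{1..<j}. I i \<omega>}" using cn by simp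
          then show False using j by (simp add: J_def cj)
        qed
        then show "j \<in> {j\<in>{1..<k}. I j \<omega>}" using j by (simp add: J_def)
      qed
    next
      show "{j\<in>{1..<k}. I j \<omega>} \<subseteq> {j\<in>{1..<K}. J j \<omega>}"
      proof
        fix j assume j: "j \<in> {j\<in>{1..<k}. I j \<omega>}"
        have "{i\<in>{1..<j}. I i \<omega>} \<subset> {i\<in>{1..<k}. I i \<omega>}" using j by auto
        then have "card {i\<in>{1..<j}. I i \<omega>} < card {i\<in>{1..<k}. I i \<omega>}" by (intro psubset_card_mono) simp_all
        then have "card {i\<in>{1..<j}. I i \<omega>} < n" using cn by simp
        then show "j \<in> {j\<in>{1..<K}. J j \<omega>}" using j k by (simp add: J_def cj)
      qed
    qed
    define S where "S = (\<Sum>j\<in>{j\<in>{1..<k}. I j \<omega>}. X j \<omega>)"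
    have "T K \<omega> = (\<Sum>j\<in>{j\<in>{1..<K}. J j \<omega>}. \<mu> * X j \<omega> - \<mu>\<^sup>2/4)"
      unfolding T_def by (rule sum.inter_filter[symmetric]) simp
    also have "\<dots> = \<mu> * S - real n * (\<mu>\<^sup>2/4)"
      unfolding seteq S_def using cn by (simp add: sum_subtractf sum_distrib_left)
    finally have TK: "T K \<omega> = \<mu> * S - real n * (\<mu>\<^sup>2/4)" .
    have mu2: "real n * (\<mu>\<^sup>2/4) = Z" using npos Z by (simp add: \<mu>_def power_mult_distrib)
    have sq: "sqrt (Z / real n) * sqrt (real n * Z) = Z"
    proof -
      have "sqrt (Z / real n) * sqrt (real n * Z) = sqrt (Z * Z)"
        by (simp add: real_sqrt_mult[symmetric]) (use npos in \<open>simp add: field_simps\<close>)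
      then show ?thesis using Z by simp
    qed
    have "\<mu> * S > \<mu> * (- sqrt (real n * Z))"
      using Sl Z npos by (intro mult_strict_left_mono_neg) (auto simp: S_def \<mu>_def)
    also have "\<mu> * (- sqrt (real n * Z)) = 2 * Z" using sq by (simp add: \<mu>_def)
    finally have "T K \<omega> > Z" using TK mu2 by linarith
    then have "1 \<le> exp (-Z) * W K \<omega>" by (simp add: W_def exp_add[symmetric])
    then have "ennreal 1 \<le> ennreal (exp (-Z) * W K \<omega>)" by (rule ennreal_leI)
    then show "\<omega> \<in> B" using \<omega> by (simp add: B_def ennreal_mult[symmetric] W_def)
  qed
  show ?thesis using BM sub Bmeas by blast
qed


lemma obs_gen_Pow: "obs_gen M S A R C j i t \<subseteq> Pow (space M)"
  by (cases t) (auto simp: obs_gen_def)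

lemma hist_gen_Pow:
  "\<Union>{obs_gen M S A R C j i t | j i t. 1 \<le> j \<and> ovalid H i t \<and> (j < k \<or> (j = k \<and> opos i t < p))} \<subseteq> Pow (space M)"
  using obs_gen_Pow by blast

lemma hist_space[simp]: "space (hist_sigma M H S A R C k p) = space M"
  by (simp add: hist_sigma_def space_measure_of_conv)

lemma hist_sets: "sets (hist_sigma M H S A R C k p) = sigma_sets (space M)
   (\<Union>{obs_gen M S A R C j i t | j i t. 1 \<le> j \<and> ovalid H i t \<and> (j < k \<or> (j = k \<and> opos i t < p))})"
  unfolding hist_sigma_def by (rule sets_measure_of[OF hist_gen_Pow])

lemma hist_gen_in:
  assumes "X \<in> obs_gen M S A R C j i t" "1 \<le> j" "ovalid H i t" "j < k \<or> (j = k \<and> opos i t < p)"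
  shows "X \<in> sets (hist_sigma M H S A R C k p)"
  unfolding hist_sets using assms by (intro sigma_sets.Basic) blast

lemma hist_subalg:
  fixes S :: "nat \<Rightarrow> nat \<Rightarrow> 'x \<Rightarrow> 's::finite" and A :: "nat \<Rightarrow> nat \<Rightarrow> 'x \<Rightarrow> 'a::finite"
  assumes "\<forall>k h. S k h \<in> M \<rightarrow>\<^sub>M count_space UNIV" "\<forall>k h. A k h \<in> M \<rightarrow>\<^sub>M count_space UNIV"
    "\<forall>k h. R k h \<in> borel_measurable M" "\<forall>k h. C k h \<in> borel_measurable M"
  shows "subalgebra M (hist_sigma M H S A R C k p)"
proof -
  have s1: "S j i -` {s} \<inter> space M \<in> sets M" for j i s
    using assms(1) by (intro measurable_sets[of _ M "count_space UNIV"]) auto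
  have s2: "A j i -` {s} \<inter> space M \<in> sets M" for j i s
    using assms(2) by (intro measurable_sets[of _ M "count_space UNIV"]) auto
  have s3: "R j i -` B \<inter> space M \<in> sets M" if "B \<in> sets borel" for j i B
    using assms(3) that by (intro measurable_sets[of _ M borel]) auto
  have s4: "C j i -` B \<inter> space M \<in> sets M" if "B \<in> sets borel" for j i B
    using assms(4) that by (intro measurable_sets[of _ M borel]) auto
  have "obs_gen M S A R C j i t \<subseteq> sets M" for j i t
    using s1 s2 s3 s4 by (cases t) (auto simp: obs_gen_def)
  then have "sigma_sets (space M)
   (\<Union>{obs_gen M S A R C j i t | j i t. 1 \<le> j \<and> ovalid H i t \<and> (j < k \<or> (j = k \<and> opos i t < p))}) \<subseteq> sets M"
    by (intro sets.sigma_sets_subset) blast+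
  then show ?thesis unfolding subalgebra_def hist_sets by simp
qed

lemma hist_S:
  fixes S :: "nat \<Rightarrow> nat \<Rightarrow> 'x \<Rightarrow> 's::finite"
  assumes "1 \<le> j" "ovalid H i OS" "j < k \<or> (j = k \<and> opos i OS < p)"
  shows "S j i \<in> hist_sigma M H S A R C k p \<rightarrow>\<^sub>M count_space UNIV"
proof -
  have "S j i -` {s} \<inter> space M \<in> sets (hist_sigma M H S A R C k p)" for s
    by (rule hist_gen_in[OF _ assms]) (auto simp: obs_gen_def)
  then show ?thesis by (subst measurable_count_space_eq2_countable) auto
qed

lemma hist_A:
  fixes A :: "nat \<Rightarrow> nat \<Rightarrow> 'x \<Rightarrow> 'a::finite"
  assumes "1 \<le> j" "ovalid H i OA" "j < k \<or> (j = k \<and> opos i OA < p)"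
  shows "A j i \<in> hist_sigma M H S A R C k p \<rightarrow>\<^sub>M count_space UNIV"
proof -
  have "A j i -` {s} \<inter> space M \<in> sets (hist_sigma M H S A R C k p)" for s
    by (rule hist_gen_in[OF _ assms]) (auto simp: obs_gen_def)
  then show ?thesis by (subst measurable_count_space_eq2_countable) auto
qed

lemma hist_R:
  assumes "1 \<le> j" "ovalid H i OR" "j < k \<or> (j = k \<and> opos i OR < p)"
  shows "R j i \<in> borel_measurable (hist_sigma M H S A R C k p)"
proof (rule measurableI)
  fix B :: "real set" assume "B \<in> sets borel"
  then show "R j i -` B \<inter> space (hist_sigma M H S A R C k p) \<in> sets (hist_sigma M H S A R C k p)"
    by (simp, intro hist_gen_in[OF _ assms]) (auto simp: obs_gen_def)
qed simp



lemma hoeff_pos: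
  fixes l p :: real
  assumes "0 \<le> l" "0 \<le> p" "p \<le> 1"
  shows "p * exp (l * (1 - p)) + (1 - p) * exp (- l * p) \<le> exp (l\<^sup>2 / 8)"
proof -
  have aux: "-l * p + ln (1 + p * (exp l - 1)) \<le> l\<^sup>2 / 8"
    using Hoeffdings_lemma_aux[of l p] assms by simp
  have u: "0 < 1 + p * (exp l - 1)"
    using assms by (intro add_pos_nonneg mult_nonneg_nonneg) auto
  have "exp (-l * p + ln (1 + p * (exp l - 1))) = exp (-l * p) * (1 + p * (exp l - 1))"
    using u by (simp only: exp_add exp_ln)
  also have "\<dots> = p * exp (l * (1 - p)) + (1 - p) * exp (- l * p)"
    by (simp add: algebra_simps exp_add[symmetric] exp_diff)
  finally show ?thesis using aux by (metis exp_le_cancel_iff)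
qed

lemma hoeff_pt:
  fixes l p :: real
  assumes "0 \<le> p" "p \<le> 1"
  shows "p * exp (l * (1 - p)) + (1 - p) * exp (- l * p) \<le> exp (l\<^sup>2 / 8)"
proof (cases "0 \<le> l")
  case True then show ?thesis using hoeff_pos assms by blast
next
  case False
  have "(1 - p) * exp ((-l) * (1 - (1 - p))) + (1 - (1 - p)) * exp (- (-l) * (1 - p)) \<le> exp ((-l)\<^sup>2 / 8)"
    using False assms by (intro hoeff_pos) auto
  then show ?thesis by (simp add: algebra_simps)
qed

lemma nn_of_real_cond_exp:
  assumes F: "sigma_finite_subalgebra M F"
    and fm: "f \<in> borel_measurable M" and fi: "integrable M f" and fpos: "\<And>x. 0 \<le> f x"
    and ce: "AE x in M. real_cond_exp M F f x = q x"
  shows "AE x in M. nn_cond_exp M F (\<lambda>x. ennreal (f x)) x = ennreal (q x)"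
proof -
  interpret sigma_finite_subalgebra M F by (fact F)
  have z: "(\<lambda>x. ennreal (- f x)) = (\<lambda>x. 0)" using fpos by (simp add: ennreal_neg)
  have "AE x in M. (\<lambda>x. 0::ennreal) x = nn_cond_exp M F (\<lambda>x. 0) x"
    by (rule nn_cond_exp_F_meas) simp
  then have z2: "AE x in M. nn_cond_exp M F (\<lambda>x. ennreal (- f x)) x = 0" unfolding z by auto
  have "(\<integral>\<^sup>+x. 1 * nn_cond_exp M F (\<lambda>x. ennreal (f x)) x \<partial>M) = (\<integral>\<^sup>+x. 1 * ennreal (f x) \<partial>M)"
    using fm by (intro nn_cond_exp_intg) auto
  also have "\<dots> = ennreal (\<integral>x. f x \<partial>M)" using fi fpos by (simp add: nn_integral_eq_integral)
  finally have "(\<integral>\<^sup>+x. nn_cond_exp M F (\<lambda>x. ennreal (f x)) x \<partial>M) \<noteq> \<infinity>" by simp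
  then have fin: "AE x in M. nn_cond_exp M F (\<lambda>x. ennreal (f x)) x \<noteq> \<infinity>"
    by (intro nn_integral_PInf_AE) auto
  show ?thesis using z2 fin ce
  proof eventually_elim
    case (elim x)
    then have "q x = enn2real (nn_cond_exp M F (\<lambda>x. ennreal (f x)) x)"
      by (simp add: real_cond_exp_def)
    then show ?case using elim(2) by (simp add: ennreal_enn2real_if)
  qed
qed



lemma trans_mgf:
  fixes f :: "'x \<Rightarrow> ennreal" and p :: "'x \<Rightarrow> real"
  assumes F: "sigma_finite_subalgebra M F" and prob: "prob_space M"
  and Qm: "Measurable.pred M Q"
  and pF: "p \<in> borel_measurable F" and p01: "\<And>\<omega>. 0 \<le> p \<omega> \<and> p \<omega> \<le> 1"
  and ce: "AE \<omega> in M. real_cond_exp M F (indicator {\<omega>\<in>space M. Q \<omega>}) \<omega> = p \<omega>"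
  and fF: "f \<in> borel_measurable F"
  shows "(\<integral>\<^sup>+\<omega>. f \<omega> * ennreal (exp (\<mu> * ((if Q \<omega> then 1 else 0) - p \<omega>))) \<partial>M)
      \<le> (\<integral>\<^sup>+\<omega>. f \<omega> * ennreal (exp (\<mu>\<^sup>2/4)) \<partial>M)"
proof -
  interpret sigma_finite_subalgebra M F by (fact F)
  interpret prob_space M by (fact prob)
  define Y :: "'x \<Rightarrow> real" where "Y = indicator {\<omega>\<in>space M. Q \<omega>}"
  have Qs: "{\<omega>\<in>space M. Q \<omega>} \<in> sets M" using Qm by (simp add: pred_def)
  have YM[measurable]: "Y \<in> borel_measurable M" unfolding Y_def using Qs by simp
  have Yi: "integrable M Y" unfolding Y_def using Qs by (simp add: integrable_indicator_iff emeasure_eq_measure)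
  have pM[measurable]: "p \<in> borel_measurable M" using pF measurable_from_subalg[OF subalg] by blast
  have fM[measurable]: "f \<in> borel_measurable M" using fF measurable_from_subalg[OF subalg] by blast
  note pF[measurable] fF[measurable]
  have Y01: "0 \<le> Y \<omega>" "Y \<omega> \<le> 1" for \<omega> unfolding Y_def by (auto simp: indicator_def)
  have e1: "AE x in M. nn_cond_exp M F (\<lambda>x. ennreal (Y x)) x = ennreal (p x)"
    using ce Y01 by (intro nn_of_real_cond_exp[OF F YM Yi]) (auto simp: Y_def)
  have i1: "integrable M (\<lambda>x. 1::real)" by simp
  have c1: "AE x in M. real_cond_exp M F (\<lambda>x. 1) x = 1"
    by (rule real_cond_exp_F_meas) auto
  have "AE x in M. real_cond_exp M F (\<lambda>x. 1 - Y x) x = real_cond_exp M F (\<lambda>x. 1) x - real_cond_exp M F Y x"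
    using i1 Yi by (rule real_cond_exp_diff)
  moreover note c1 ce
  ultimately have ce2: "AE x in M. real_cond_exp M F (\<lambda>x. 1 - Y x) x = 1 - p x"
    unfolding Y_def by eventually_elim simp
  have e2: "AE x in M. nn_cond_exp M F (\<lambda>x. ennreal (1 - Y x)) x = ennreal (1 - p x)"
    using ce2 Y01 Yi by (intro nn_of_real_cond_exp[OF F]) auto
  define a where "a \<omega> = f \<omega> * ennreal (exp (\<mu> * (1 - p \<omega>)))" for \<omega>
  define b where "b \<omega> = f \<omega> * ennreal (exp (- \<mu> * p \<omega>))" for \<omega>
  have aF[measurable]: "a \<in> borel_measurable F" unfolding a_def by measurable
  have bF[measurable]: "b \<in> borel_measurable F" unfolding b_def by measurable
  have aM[measurable]: "a \<in> borel_measurable M" unfolding a_def by measurable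
  have bM[measurable]: "b \<in> borel_measurable M" unfolding b_def by measurable
  have pw: "f \<omega> * ennreal (exp (\<mu> * ((if Q \<omega> then 1 else 0) - p \<omega>)))
      = a \<omega> * ennreal (Y \<omega>) + b \<omega> * ennreal (1 - Y \<omega>)" if "\<omega> \<in> space M" for \<omega>
    using that by (auto simp: a_def b_def Y_def)
  have "(\<integral>\<^sup>+\<omega>. f \<omega> * ennreal (exp (\<mu> * ((if Q \<omega> then 1 else 0) - p \<omega>))) \<partial>M)
      = (\<integral>\<^sup>+\<omega>. a \<omega> * ennreal (Y \<omega>) + b \<omega> * ennreal (1 - Y \<omega>) \<partial>M)"
    by (intro nn_integral_cong) (simp add: pw)
  also have "\<dots> = (\<integral>\<^sup>+\<omega>. a \<omega> * ennreal (Y \<omega>) \<partial>M) + (\<integral>\<^sup>+\<omega>. b \<omega> * ennreal (1 - Y \<omega>) \<partial>M)"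
    by (intro nn_integral_add) measurable
  also have "(\<integral>\<^sup>+\<omega>. a \<omega> * ennreal (Y \<omega>) \<partial>M) = (\<integral>\<^sup>+\<omega>. a \<omega> * nn_cond_exp M F (\<lambda>x. ennreal (Y x)) \<omega> \<partial>M)"
    by (intro nn_cond_exp_intg[symmetric]) measurable
  also have "\<dots> = (\<integral>\<^sup>+\<omega>. a \<omega> * ennreal (p \<omega>) \<partial>M)"
    using e1 by (intro nn_integral_cong_AE) auto
  also have "(\<integral>\<^sup>+\<omega>. b \<omega> * ennreal (1 - Y \<omega>) \<partial>M) = (\<integral>\<^sup>+\<omega>. b \<omega> * nn_cond_exp M F (\<lambda>x. ennreal (1 - Y x)) \<omega> \<partial>M)"
    by (intro nn_cond_exp_intg[symmetric]) measurable
  also have "\<dots> = (\<integral>\<^sup>+\<omega>. b \<omega> * ennreal (1 - p \<omega>) \<partial>M)"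
    using e2 by (intro nn_integral_cong_AE) auto
  also have "(\<integral>\<^sup>+\<omega>. a \<omega> * ennreal (p \<omega>) \<partial>M) + (\<integral>\<^sup>+\<omega>. b \<omega> * ennreal (1 - p \<omega>) \<partial>M)
      = (\<integral>\<^sup>+\<omega>. a \<omega> * ennreal (p \<omega>) + b \<omega> * ennreal (1 - p \<omega>) \<partial>M)"
    by (intro nn_integral_add[symmetric]) measurable
  also have "\<dots> \<le> (\<integral>\<^sup>+\<omega>. f \<omega> * ennreal (exp (\<mu>\<^sup>2/4)) \<partial>M)"
  proof (intro nn_integral_mono)
    fix \<omega>
    have p0: "0 \<le> p \<omega>" "p \<omega> \<le> 1" using p01 by auto
    have "a \<omega> * ennreal (p \<omega>) + b \<omega> * ennreal (1 - p \<omega>)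
        = f \<omega> * ennreal (p \<omega> * exp (\<mu> * (1 - p \<omega>)) + (1 - p \<omega>) * exp (- \<mu> * p \<omega>))"
      using p0 by (simp add: a_def b_def ennreal_mult ennreal_plus[symmetric] distrib_left ac_simps)
    also have "\<dots> \<le> f \<omega> * ennreal (exp (\<mu>\<^sup>2/4))"
    proof (intro mult_left_mono ennreal_leI)
      have "p \<omega> * exp (\<mu> * (1 - p \<omega>)) + (1 - p \<omega>) * exp (- \<mu> * p \<omega>) \<le> exp (\<mu>\<^sup>2/8)"
        using hoeff_pt p0 by blast
      also have "\<dots> \<le> exp (\<mu>\<^sup>2/4)" by simp
      finally show "p \<omega> * exp (\<mu> * (1 - p \<omega>)) + (1 - p \<omega>) * exp (- \<mu> * p \<omega>) \<le> exp (\<mu>\<^sup>2/4)" .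
    qed simp
    finally show "a \<omega> * ennreal (p \<omega>) + b \<omega> * ennreal (1 - p \<omega>) \<le> f \<omega> * ennreal (exp (\<mu>\<^sup>2/4))" .
  qed
  finally show ?thesis .
qed



lemma meas_comp2:
  fixes f :: "'x \<Rightarrow> 's::countable" and g :: "'x \<Rightarrow> 'a::countable" and q :: "'s \<Rightarrow> 'a \<Rightarrow> real"
  assumes "f \<in> N \<rightarrow>\<^sub>M count_space UNIV" "g \<in> N \<rightarrow>\<^sub>M count_space UNIV"
  shows "(\<lambda>\<omega>. q (f \<omega>) (g \<omega>)) \<in> borel_measurable N"
proof -
  have "(\<lambda>\<omega>. q i (g \<omega>)) \<in> borel_measurable N" for i
    by (rule measurable_compose_countable[where f="\<lambda>j \<omega>. q i j" and g=g]) (use assms in auto)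
  then show ?thesis
    by (rule measurable_compose_countable[where f="\<lambda>i \<omega>. q i (g \<omega>)" and g=f]) (use assms in auto)
qed

lemma sfs_of_prob:
  assumes "prob_space M" "subalgebra M F"
  shows "sigma_finite_subalgebra M F"
proof -
  interpret prob_space M by fact
  show ?thesis
    by (rule finite_measure_subalgebra_is_sigma_finite, intro finite_measure_subalgebra.intro finite_measure_subalgebra_axioms.intro)
       (use assms finite_measure_axioms in auto)
qed


lemma reward_bad:
  fixes M :: "'x measure"
    and S :: "nat \<Rightarrow> nat \<Rightarrow> 'x \<Rightarrow> 's::finite"
    and A :: "nat \<Rightarrow> nat \<Rightarrow> 'x \<Rightarrow> 'a::finite"
    and R Cst :: "nat \<Rightarrow> nat \<Rightarrow> 'x \<Rightarrow> real"
    and r :: "nat \<Rightarrow> 's \<Rightarrow> 'a \<Rightarrow> real"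
  assumes M: "prob_space M"
    and meas_S: "\<forall>k h. S k h \<in> M \<rightarrow>\<^sub>M count_space UNIV"
    and meas_A: "\<forall>k h. A k h \<in> M \<rightarrow>\<^sub>M count_space UNIV"
    and meas_R: "\<forall>k h. R k h \<in> borel_measurable M"
    and meas_C: "\<forall>k h. Cst k h \<in> borel_measurable M"
    and rew_noise: "\<forall>k\<in>{1..K}. \<forall>h\<in>{1..H}.
        integrable M (\<lambda>\<omega>. R k h \<omega> - r h (S k h \<omega>) (A k h \<omega>))
        \<and> (AE \<omega> in M. real_cond_exp M (hist_sigma M H S A R Cst k (opos h OR))
               (\<lambda>\<omega>. R k h \<omega> - r h (S k h \<omega>) (A k h \<omega>)) \<omega> = 0)
        \<and> (\<forall>l::real. AE \<omega> in M. nn_cond_exp M (hist_sigma M H S A R Cst k (opos h OR))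
               (\<lambda>\<omega>. ennreal (exp (l * (R k h \<omega> - r h (S k h \<omega>) (A k h \<omega>))))) \<omega>
             \<le> ennreal (exp (l\<^sup>2 / 4)))"
    and h: "h \<in> {1..H}" and n: "1 \<le> n" and Z: "0 < Z"
  shows "\<exists>B\<in>sets M. {\<omega>\<in>space M. \<exists>k\<in>{1..K}. card {j\<in>{1..<k}. S j h \<omega> = s \<and> A j h \<omega> = a} = n
            \<and> (\<Sum>j\<in>{j\<in>{1..<k}. S j h \<omega> = s \<and> A j h \<omega> = a}. R j h \<omega> - r h (S j h \<omega>) (A j h \<omega>)) < - sqrt (real n * Z)} \<subseteq> B
          \<and> measure M B \<le> exp (-Z)"
proof -
  have mS[measurable]: "S k i \<in> M \<rightarrow>\<^sub>M count_space UNIV" for k i using meas_S by blast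
  have mA[measurable]: "A k i \<in> M \<rightarrow>\<^sub>M count_space UNIV" for k i using meas_A by blast
  have mR[measurable]: "R k i \<in> borel_measurable M" for k i using meas_R by blast
  define G where "G j = hist_sigma M H S A R Cst j (opos h OR)" for j
  have h1: "1 \<le> h" "h \<le> H" using h by auto
  show ?thesis
  proof (rule conc[where M=M and I="\<lambda>j \<omega>. S j h \<omega> = s \<and> A j h \<omega> = a"
        and X="\<lambda>j \<omega>. R j h \<omega> - r h (S j h \<omega>) (A j h \<omega>)" and K=K and G=G and n=n and Z=Z])
    show "prob_space M" by fact
    show "1 \<le> n" "0 < Z" by fact+
    show "Measurable.pred M (\<lambda>\<omega>. S j h \<omega> = s \<and> A j h \<omega> = a)" for j by measurable
    show "(\<lambda>\<omega>. R j h \<omega> - r h (S j h \<omega>) (A j h \<omega>)) \<in> borel_measurable M" for j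
    proof -
      have [measurable]: "(\<lambda>\<omega>. r h (S j h \<omega>) (A j h \<omega>)) \<in> borel_measurable M" by (rule meas_comp2[OF mS mA])
      show ?thesis by measurable
    qed
    show "subalgebra M (G j)" for j unfolding G_def by (rule hist_subalg) fact+
  next
    fix j i assume j: "j \<in> {1..<K}" and i: "i \<in> {1..j}"
    have [measurable]: "S i h \<in> G j \<rightarrow>\<^sub>M count_space UNIV" unfolding G_def
      by (rule hist_S) (use i h1 in \<open>auto simp: ovalid_def opos_def\<close>)
    have [measurable]: "A i h \<in> G j \<rightarrow>\<^sub>M count_space UNIV" unfolding G_def
      by (rule hist_A) (use i h1 in \<open>auto simp: ovalid_def opos_def\<close>)
    show "Measurable.pred (G j) (\<lambda>\<omega>. S i h \<omega> = s \<and> A i h \<omega> = a)" by measurable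
  next
    fix j i assume j: "j \<in> {1..<K}" and i: "i \<in> {1..<j}"
    have a1: "S i h \<in> G j \<rightarrow>\<^sub>M count_space UNIV" unfolding G_def
      by (rule hist_S) (use i h1 in \<open>auto simp: ovalid_def opos_def\<close>)
    have a2: "A i h \<in> G j \<rightarrow>\<^sub>M count_space UNIV" unfolding G_def
      by (rule hist_A) (use i h1 in \<open>auto simp: ovalid_def opos_def\<close>)
    have [measurable]: "R i h \<in> borel_measurable (G j)" unfolding G_def
      by (rule hist_R) (use i h1 in \<open>auto simp: ovalid_def opos_def\<close>)
    have [measurable]: "(\<lambda>\<omega>. r h (S i h \<omega>) (A i h \<omega>)) \<in> borel_measurable (G j)"
      by (rule meas_comp2[OF a1 a2])
    show "(\<lambda>\<omega>. R i h \<omega> - r h (S i h \<omega>) (A i h \<omega>)) \<in> borel_measurable (G j)" by measurable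
  next
    fix j and f :: "'x \<Rightarrow> ennreal" and \<mu> :: real
    assume j: "j \<in> {1..<K}" and f: "f \<in> borel_measurable (G j)"
    interpret sigma_finite_subalgebra M "G j"
      by (rule sfs_of_prob[OF M]) (unfold G_def, rule hist_subalg, fact+)
    have jK: "j \<in> {1..K}" using j by auto
    have ae: "AE \<omega> in M. nn_cond_exp M (G j)
               (\<lambda>\<omega>. ennreal (exp (\<mu> * (R j h \<omega> - r h (S j h \<omega>) (A j h \<omega>))))) \<omega>
             \<le> ennreal (exp (\<mu>\<^sup>2 / 4))"
      using rew_noise jK h unfolding G_def by blast
    have [measurable]: "(\<lambda>\<omega>. r h (S j h \<omega>) (A j h \<omega>)) \<in> borel_measurable M"
      by (rule meas_comp2[OF mS mA])
    note f[measurable]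
    have "(\<integral>\<^sup>+\<omega>. f \<omega> * ennreal (exp (\<mu> * (R j h \<omega> - r h (S j h \<omega>) (A j h \<omega>)))) \<partial>M)
       = (\<integral>\<^sup>+\<omega>. f \<omega> * nn_cond_exp M (G j) (\<lambda>\<omega>. ennreal (exp (\<mu> * (R j h \<omega> - r h (S j h \<omega>) (A j h \<omega>))))) \<omega> \<partial>M)"
      by (rule nn_cond_exp_intg[symmetric]) measurable
    also have "\<dots> \<le> (\<integral>\<^sup>+\<omega>. f \<omega> * ennreal (exp (\<mu>\<^sup>2 / 4)) \<partial>M)"
      using ae by (intro nn_integral_mono_AE) (auto elim!: eventually_mono intro: mult_left_mono)
    finally show "(\<integral>\<^sup>+\<omega>. f \<omega> * ennreal (exp (\<mu> * (R j h \<omega> - r h (S j h \<omega>) (A j h \<omega>)))) \<partial>M)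
       \<le> (\<integral>\<^sup>+\<omega>. f \<omega> * ennreal (exp (\<mu>\<^sup>2 / 4)) \<partial>M)" .
  qed
qed


lemma trans_bad:
  fixes M :: "'x measure"
    and S :: "nat \<Rightarrow> nat \<Rightarrow> 'x \<Rightarrow> 's::finite"
    and A :: "nat \<Rightarrow> nat \<Rightarrow> 'x \<Rightarrow> 'a::finite"
    and R Cst :: "nat \<Rightarrow> nat \<Rightarrow> 'x \<Rightarrow> real"
    and P :: "nat \<Rightarrow> 's \<Rightarrow> 'a \<Rightarrow> 's pmf"
  assumes M: "prob_space M"
    and meas_S: "\<forall>k h. S k h \<in> M \<rightarrow>\<^sub>M count_space UNIV"
    and meas_A: "\<forall>k h. A k h \<in> M \<rightarrow>\<^sub>M count_space UNIV"
    and meas_R: "\<forall>k h. R k h \<in> borel_measurable M"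
    and meas_C: "\<forall>k h. Cst k h \<in> borel_measurable M"
    and trans: "\<forall>k\<in>{1..K}. \<forall>h\<in>{1..H}. \<forall>s'. AE \<omega> in M.
        real_cond_exp M (hist_sigma M H S A R Cst k (opos (Suc h) OS))
          (indicator {\<omega>\<in>space M. S k (Suc h) \<omega> = s'}) \<omega> = pmf (P h (S k h \<omega>) (A k h \<omega>)) s'"
    and h: "h \<in> {1..H}" and n: "1 \<le> n" and Z: "0 < Z"
  shows "\<exists>B\<in>sets M. {\<omega>\<in>space M. \<exists>k\<in>{1..K}. card {j\<in>{1..<k}. S j h \<omega> = s \<and> A j h \<omega> = a} = n
            \<and> (\<Sum>j\<in>{j\<in>{1..<k}. S j h \<omega> = s \<and> A j h \<omega> = a}.
                 (if S j (Suc h) \<omega> = s' then 1 else 0) - pmf (P h (S j h \<omega>) (A j h \<omega>)) s') < - sqrt (real n * Z)} \<subseteq> B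
          \<and> measure M B \<le> exp (-Z)"
proof -
  have mS[measurable]: "S k i \<in> M \<rightarrow>\<^sub>M count_space UNIV" for k i using meas_S by blast
  have mA[measurable]: "A k i \<in> M \<rightarrow>\<^sub>M count_space UNIV" for k i using meas_A by blast
  define G where "G j = hist_sigma M H S A R Cst j (opos (Suc h) OS)" for j
  define p where "p j \<omega> = pmf (P h (S j h \<omega>) (A j h \<omega>)) s'" for j \<omega>
  have h1: "1 \<le> h" "h \<le> H" using h by auto
  have pM[measurable]: "p j \<in> borel_measurable M" for j
    unfolding p_def by (rule meas_comp2[OF mS mA])
  show ?thesis unfolding p_def[symmetric]
  proof (rule conc[where M=M and I="\<lambda>j \<omega>. S j h \<omega> = s \<and> A j h \<omega> = a"
        and X="\<lambda>j \<omega>. (if S j (Suc h) \<omega> = s' then 1 else 0) - p j \<omega>" and K=K and G=G and n=n and Z=Z])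
    show "prob_space M" by fact
    show "1 \<le> n" "0 < Z" by fact+
    show "Measurable.pred M (\<lambda>\<omega>. S j h \<omega> = s \<and> A j h \<omega> = a)" for j by measurable
    show "(\<lambda>\<omega>. (if S j (Suc h) \<omega> = s' then 1 else 0) - p j \<omega>) \<in> borel_measurable M" for j
      by measurable
    show "subalgebra M (G j)" for j unfolding G_def by (rule hist_subalg) fact+
  next
    fix j i assume j: "j \<in> {1..<K}" and i: "i \<in> {1..j}"
    have [measurable]: "S i h \<in> G j \<rightarrow>\<^sub>M count_space UNIV" unfolding G_def
      by (rule hist_S) (use i h1 in \<open>auto simp: ovalid_def opos_def\<close>)
    have [measurable]: "A i h \<in> G j \<rightarrow>\<^sub>M count_space UNIV" unfolding G_def
      by (rule hist_A) (use i h1 in \<open>auto simp: ovalid_def opos_def\<close>)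
    show "Measurable.pred (G j) (\<lambda>\<omega>. S i h \<omega> = s \<and> A i h \<omega> = a)" by measurable
  next
    fix j i assume j: "j \<in> {1..<K}" and i: "i \<in> {1..<j}"
    have a1: "S i h \<in> G j \<rightarrow>\<^sub>M count_space UNIV" unfolding G_def
      by (rule hist_S) (use i h1 in \<open>auto simp: ovalid_def opos_def\<close>)
    have a2: "A i h \<in> G j \<rightarrow>\<^sub>M count_space UNIV" unfolding G_def
      by (rule hist_A) (use i h1 in \<open>auto simp: ovalid_def opos_def\<close>)
    have [measurable]: "S i (Suc h) \<in> G j \<rightarrow>\<^sub>M count_space UNIV" unfolding G_def
      by (rule hist_S) (use i h1 in \<open>auto simp: ovalid_def opos_def\<close>)
    have [measurable]: "p i \<in> borel_measurable (G j)"
      unfolding p_def by (rule meas_comp2[OF a1 a2])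
    show "(\<lambda>\<omega>. (if S i (Suc h) \<omega> = s' then 1 else 0) - p i \<omega>) \<in> borel_measurable (G j)" by measurable
  next
    fix j and f :: "'x \<Rightarrow> ennreal" and \<mu> :: real
    assume j: "j \<in> {1..<K}" and f: "f \<in> borel_measurable (G j)"
    have sf: "sigma_finite_subalgebra M (G j)"
      by (rule sfs_of_prob[OF M]) (unfold G_def, rule hist_subalg, fact+)
    have jK: "j \<in> {1..K}" using j by auto
    have a1: "S j h \<in> G j \<rightarrow>\<^sub>M count_space UNIV" unfolding G_def
      by (rule hist_S) (use h1 j in \<open>auto simp: ovalid_def opos_def\<close>)
    have a2: "A j h \<in> G j \<rightarrow>\<^sub>M count_space UNIV" unfolding G_def
      by (rule hist_A) (use h1 j in \<open>auto simp: ovalid_def opos_def\<close>)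
    have pG: "p j \<in> borel_measurable (G j)"
      unfolding p_def by (rule meas_comp2[OF a1 a2])
    have ce: "AE \<omega> in M. real_cond_exp M (G j) (indicator {\<omega>\<in>space M. S j (Suc h) \<omega> = s'}) \<omega> = p j \<omega>"
      using trans jK h unfolding G_def p_def by blast
    show "(\<integral>\<^sup>+\<omega>. f \<omega> * ennreal (exp (\<mu> * ((if S j (Suc h) \<omega> = s' then 1 else 0) - p j \<omega>))) \<partial>M)
       \<le> (\<integral>\<^sup>+\<omega>. f \<omega> * ennreal (exp (\<mu>\<^sup>2 / 4)) \<partial>M)"
      by (rule trans_mgf[OF sf M _ pG _ ce f]) (auto simp: p_def pmf_le_1)
  qed
qed



lemma vaux_meas:
  fixes g :: "'x \<Rightarrow> nat \<Rightarrow> 's::finite \<Rightarrow> 'a::finite \<Rightarrow> real" and Q :: "'x \<Rightarrow> nat \<Rightarrow> 's \<Rightarrow> 'a \<Rightarrow> 's \<Rightarrow> real"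
  assumes "\<And>h s a. (\<lambda>\<omega>. g \<omega> h s a) \<in> borel_measurable M"
    and "\<And>h s a s'. (\<lambda>\<omega>. Q \<omega> h s a s') \<in> borel_measurable M"
  shows "(\<lambda>\<omega>. Vaux m \<pi> (g \<omega>) (Q \<omega>) h s) \<in> borel_measurable M"
proof (induction m arbitrary: h s)
  case 0 then show ?case by simp
next
  case (Suc m)
  note assms[measurable] Suc.IH[measurable]
  show ?case by (simp only: Vaux.simps) measurable
qed

lemma ncnt_eq: "real (max 1 (Ncnt Sd Ad k h s a)) = max 1 (\<Sum>j\<in>{1..<k}. if Sd j h = s \<and> Ad j h = a then 1 else 0)"
proof -
  have eq: "real (card {j\<in>{1..<k}. Sd j h = s \<and> Ad j h = a}) = (\<Sum>j\<in>{1..<k}. if Sd j h = s \<and> Ad j h = a then 1 else 0)"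
    by (rule card_filter_real) simp
  show ?thesis by (simp only: Ncnt_def of_nat_max of_nat_1 eq)
qed

lemma ghat_eq: "ghat Rd Sd Ad k h s a = (\<Sum>j\<in>{1..<k}. if Sd j h = s \<and> Ad j h = a then Rd j h else 0)
     / max 1 (\<Sum>j\<in>{1..<k}. if Sd j h = s \<and> Ad j h = a then 1 else 0)"
proof -
  have eq: "(\<Sum>j\<in>{j\<in>{1..<k}. Sd j h = s \<and> Ad j h = a}. Rd j h) = (\<Sum>j\<in>{1..<k}. if Sd j h = s \<and> Ad j h = a then Rd j h else 0)"
    by (rule sum.inter_filter) simp
  show ?thesis by (simp only: ghat_def ncnt_eq[symmetric] eq)
qed

lemma phat_eq: "Phat Sd Ad k h s a s' = (\<Sum>j\<in>{1..<k}. if Sd j h = s \<and> Ad j h = a \<and> Sd j (Suc h) = s' then 1 else 0)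
     / max 1 (\<Sum>j\<in>{1..<k}. if Sd j h = s \<and> Ad j h = a then 1 else 0)"
proof -
  have eq: "real (card {j\<in>{1..<k}. Sd j h = s \<and> Ad j h = a \<and> Sd j (Suc h) = s'}) = (\<Sum>j\<in>{1..<k}. if Sd j h = s \<and> Ad j h = a \<and> Sd j (Suc h) = s' then 1 else 0)"
    by (rule card_filter_real) simp
  show ?thesis by (simp only: Phat_def ncnt_eq[symmetric] eq)
qed

lemma beta_eq: "beta H K \<delta> Sd Ad k h s a =
     sqrt (ln (16 * real CARD('s::finite) ^ 2 * real CARD('a::finite) * real H * real K / \<delta>)
           / max 1 (\<Sum>j\<in>{1..<k}. if Sd j h = (s::'s) \<and> Ad j h = (a::'a) then 1 else 0))"
  unfolding beta_def ncnt_eq[symmetric] by simp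

lemma vr_hat_meas:
  fixes S :: "nat \<Rightarrow> nat \<Rightarrow> 'x \<Rightarrow> 's::finite" and A :: "nat \<Rightarrow> nat \<Rightarrow> 'x \<Rightarrow> 'a::finite"
  assumes meas_S: "\<forall>k h. S k h \<in> M \<rightarrow>\<^sub>M count_space UNIV"
    and meas_A: "\<forall>k h. A k h \<in> M \<rightarrow>\<^sub>M count_space UNIV"
    and meas_R: "\<forall>k h. R k h \<in> borel_measurable M"
  shows "(\<lambda>\<omega>. Vr_hat H K \<delta> (\<lambda>j i. S j i \<omega>) (\<lambda>j i. A j i \<omega>) (\<lambda>j i. R j i \<omega>) \<mu> k \<pi>) \<in> borel_measurable M"
proof -
  have mS[measurable]: "S k i \<in> M \<rightarrow>\<^sub>M count_space UNIV" for k i using meas_S by blast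
  have mA[measurable]: "A k i \<in> M \<rightarrow>\<^sub>M count_space UNIV" for k i using meas_A by blast
  have mR[measurable]: "R k i \<in> borel_measurable M" for k i using meas_R by blast
  have g: "(\<lambda>\<omega>. rtilde H K \<delta> (\<lambda>j i. S j i \<omega>) (\<lambda>j i. A j i \<omega>) (\<lambda>j i. R j i \<omega>) k h s a) \<in> borel_measurable M" for h s a
    unfolding rtilde_def ghat_eq beta_eq by measurable
  have q: "(\<lambda>\<omega>. Phat (\<lambda>j i. S j i \<omega>) (\<lambda>j i. A j i \<omega>) k h s a s') \<in> borel_measurable M" for h s a s'
    unfolding phat_eq by measurable
  have [measurable]: "(\<lambda>\<omega>. Vaux m \<pi> (rtilde H K \<delta> (\<lambda>j i. S j i \<omega>) (\<lambda>j i. A j i \<omega>) (\<lambda>j i. R j i \<omega>) k)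
        (Phat (\<lambda>j i. S j i \<omega>) (\<lambda>j i. A j i \<omega>) k) h s) \<in> borel_measurable M" for m h s
    by (rule vaux_meas[where g="\<lambda>\<omega>. rtilde H K \<delta> (\<lambda>j i. S j i \<omega>) (\<lambda>j i. A j i \<omega>) (\<lambda>j i. R j i \<omega>) k"
          and Q="\<lambda>\<omega>. Phat (\<lambda>j i. S j i \<omega>) (\<lambda>j i. A j i \<omega>) k"]) (use g q in auto)
  show ?thesis unfolding Vr_hat_def V1_def Vh_def by measurable
qed



lemma opt_V1:
  fixes r g :: "nat \<Rightarrow> 's::finite \<Rightarrow> 'a::finite \<Rightarrow> real" and P :: "nat \<Rightarrow> 's \<Rightarrow> 'a \<Rightarrow> 's pmf"
    and Q :: "nat \<Rightarrow> 's \<Rightarrow> 'a \<Rightarrow> 's \<Rightarrow> real"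
  assumes r_range: "\<forall>h\<in>{1..H}. \<forall>s a. 0 \<le> r h s a \<and> r h s a \<le> 1"
   and Qpos: "\<forall>h s a s'. 0 \<le> Q h s a s'"
   and cond: "\<forall>h\<in>{1..H}. \<forall>s a. real H * (\<Sum>s'\<in>UNIV. max 0 (kern P h s a s' - Q h s a s')) \<le> g h s a - r h s a"
  shows "V1 H \<pi> r (kern P) \<mu> \<le> min (real H) (V1 H \<pi> g Q \<mu>)"
proof -
  have kp: "(\<Sum>s'\<in>UNIV. kern P h s a s') = 1" for h s a
    unfolding kern_def by (simp add: sum_pmf_eq_1)
  have rng: "{1..<1+H} = {1..H}" by auto
  have hyp: "\<forall>h'\<in>{1..<1+H}. \<forall>s a. 0 \<le> r h' s a \<and> r h' s a \<le> 1 \<and> (\<forall>s'. 0 \<le> kern P h' s a s') \<and> (\<Sum>s'\<in>UNIV. kern P h' s a s') = 1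
      \<and> (\<forall>s'. 0 \<le> Q h' s a s') \<and> real H * (\<Sum>s'\<in>UNIV. max 0 (kern P h' s a s' - Q h' s a s')) \<le> g h' s a - r h' s a"
    unfolding rng using r_range Qpos cond kp by (auto simp: kern_def)
  have b: "0 \<le> Vaux H \<pi> r (kern P) 1 s \<and> Vaux H \<pi> r (kern P) 1 s \<le> real H" for s
    by (rule vaux_bounds) (use hyp in blast)
  have o: "Vaux H \<pi> r (kern P) 1 s \<le> Vaux H \<pi> g Q 1 s" for s
    by (rule vaux_opt) (use hyp in blast, simp)
  have "V1 H \<pi> r (kern P) \<mu> \<le> (\<Sum>s\<in>UNIV. pmf \<mu> s * real H)"
    unfolding V1_def Vh_def by (intro sum_mono mult_left_mono) (use b in auto)
  also have "\<dots> = real H" by (simp add: sum_distrib_right[symmetric] sum_pmf_eq_1)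
  finally have 1: "V1 H \<pi> r (kern P) \<mu> \<le> real H" .
  have 2: "V1 H \<pi> r (kern P) \<mu> \<le> V1 H \<pi> g Q \<mu>"
    unfolding V1_def Vh_def by (intro sum_mono mult_left_mono) (use o in auto)
  show ?thesis using 1 2 by simp
qed

lemma sqrt_id: "0 < n \<Longrightarrow> 0 \<le> Z \<Longrightarrow> sqrt (n * Z) = n * sqrt (Z / n)"
proof -
  assume n: "0 < n" and Z: "0 \<le> Z"
  have "n * Z = n^2 * (Z/n)" using n by (simp add: power2_eq_square field_simps)
  then have "sqrt (n*Z) = sqrt (n^2) * sqrt (Z/n)" by (simp only: real_sqrt_mult)
  then show ?thesis using n by simp
qed

lemma good_r:
  fixes Sd :: "nat \<Rightarrow> nat \<Rightarrow> 's::finite" and Ad :: "nat \<Rightarrow> nat \<Rightarrow> 'a::finite"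
  assumes Z1: "1 \<le> ln (16 * real CARD('s)^2 * real CARD('a) * real H * real K / \<delta>)" and r1: "r h s a \<le> 1"
   and nb: "1 \<le> card {j\<in>{1..<k}. Sd j h = s \<and> Ad j h = a} \<Longrightarrow>
      - sqrt (real (card {j\<in>{1..<k}. Sd j h = s \<and> Ad j h = a}) * ln (16 * real CARD('s)^2 * real CARD('a) * real H * real K / \<delta>))
       \<le> (\<Sum>j\<in>{j\<in>{1..<k}. Sd j h = s \<and> Ad j h = a}. Rd j h - r h (Sd j h) (Ad j h))"
  shows "r h s a - beta H K \<delta> Sd Ad k h s a \<le> ghat Rd Sd Ad k h s a"
proof -
  define Z where "Z = ln (16 * real CARD('s)^2 * real CARD('a) * real H * real K / \<delta>)"
  define V where "V = {j\<in>{1..<k}. Sd j h = s \<and> Ad j h = a}"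
  define n where "n = card V"
  have be: "beta H K \<delta> Sd Ad k h s a = sqrt (Z / real (max 1 n))"
    unfolding beta_def Z_def n_def V_def Ncnt_def ..
  have gh: "ghat Rd Sd Ad k h s a = (\<Sum>j\<in>V. Rd j h) / real (max 1 n)"
    unfolding ghat_def n_def V_def Ncnt_def ..
  show ?thesis
  proof (cases "n = 0")
    case True
    then have "V = {}" unfolding n_def V_def by simp
    then have "ghat Rd Sd Ad k h s a = 0" using gh by simp
    moreover have "1 \<le> beta H K \<delta> Sd Ad k h s a" using be True Z1 by (simp add: Z_def)
    ultimately show ?thesis using r1 by simp
  next
    case False
    then have np: "0 < real n" "1 \<le> n" by auto
    have "(\<Sum>j\<in>V. Rd j h - r h (Sd j h) (Ad j h)) = (\<Sum>j\<in>V. Rd j h - r h s a)"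
      by (rule sum.cong) (auto simp: V_def)
    also have "\<dots> = (\<Sum>j\<in>V. Rd j h) - real n * r h s a" by (simp add: sum_subtractf n_def)
    finally have eq: "(\<Sum>j\<in>V. Rd j h - r h (Sd j h) (Ad j h)) = (\<Sum>j\<in>V. Rd j h) - real n * r h s a" .
    have "- sqrt (real n * Z) \<le> (\<Sum>j\<in>V. Rd j h) - real n * r h s a"
      using nb np eq unfolding n_def V_def Z_def by simp
    then have "- (real n * sqrt (Z / real n)) \<le> (\<Sum>j\<in>V. Rd j h) - real n * r h s a"
      using sqrt_id[of "real n" Z] np Z1 by (simp add: Z_def)
    then have "real n * (r h s a - sqrt (Z / real n)) \<le> (\<Sum>j\<in>V. Rd j h)" by (simp add: algebra_simps)
    then have "r h s a - sqrt (Z / real n) \<le> (\<Sum>j\<in>V. Rd j h) / real n"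
      using np by (simp add: field_simps)
    then show ?thesis using be gh np by (simp add: max_def)
  qed
qed

lemma good_P:
  fixes Sd :: "nat \<Rightarrow> nat \<Rightarrow> 's::finite" and Ad :: "nat \<Rightarrow> nat \<Rightarrow> 'a::finite"
  assumes Z1: "1 \<le> ln (16 * real CARD('s)^2 * real CARD('a) * real H * real K / \<delta>)"
   and nb: "1 \<le> card {j\<in>{1..<k}. Sd j h = s \<and> Ad j h = a} \<Longrightarrow>
      - sqrt (real (card {j\<in>{1..<k}. Sd j h = s \<and> Ad j h = a}) * ln (16 * real CARD('s)^2 * real CARD('a) * real H * real K / \<delta>))
       \<le> (\<Sum>j\<in>{j\<in>{1..<k}. Sd j h = s \<and> Ad j h = a}. (if Sd j (Suc h) = s' then 1 else 0) - pmf (P h (Sd j h) (Ad j h)) s')"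
  shows "kern P h s a s' - beta H K \<delta> Sd Ad k h s a \<le> Phat Sd Ad k h s a s'"
proof -
  define Z where "Z = ln (16 * real CARD('s)^2 * real CARD('a) * real H * real K / \<delta>)"
  define V where "V = {j\<in>{1..<k}. Sd j h = s \<and> Ad j h = a}"
  define n where "n = card V"
  define c where "c = card {j\<in>{1..<k}. Sd j h = s \<and> Ad j h = a \<and> Sd j (Suc h) = s'}"
  have be: "beta H K \<delta> Sd Ad k h s a = sqrt (Z / real (max 1 n))"
    unfolding beta_def Z_def n_def V_def Ncnt_def ..
  have ph: "Phat Sd Ad k h s a s' = real c / real (max 1 n)"
    unfolding Phat_def n_def V_def Ncnt_def c_def ..
  have cV: "{j\<in>{1..<k}. Sd j h = s \<and> Ad j h = a \<and> Sd j (Suc h) = s'} = {j\<in>V. Sd j (Suc h) = s'}"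
    unfolding V_def by auto
  have k1: "kern P h s a s' \<le> 1" by (simp add: kern_def pmf_le_1)
  show ?thesis
  proof (cases "n = 0")
    case True
    then have "V = {}" unfolding n_def V_def by simp
    then have "c = 0" unfolding c_def cV by simp
    then have "Phat Sd Ad k h s a s' = 0" using ph by simp
    moreover have "1 \<le> beta H K \<delta> Sd Ad k h s a" using be True Z1 by (simp add: Z_def)
    ultimately show ?thesis using k1 by simp
  next
    case False
    then have np: "0 < real n" "1 \<le> n" by auto
    have fV: "finite V" unfolding V_def by simp
    have "(\<Sum>j\<in>V. (if Sd j (Suc h) = s' then 1 else 0) - pmf (P h (Sd j h) (Ad j h)) s')
        = (\<Sum>j\<in>V. (if Sd j (Suc h) = s' then 1 else 0) - kern P h s a s')"
      by (rule sum.cong) (auto simp: V_def kern_def)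
    also have "\<dots> = (\<Sum>j\<in>V. (if Sd j (Suc h) = s' then 1 else 0)) - real n * kern P h s a s'"
      by (simp add: sum_subtractf n_def)
    also have "(\<Sum>j\<in>V. (if Sd j (Suc h) = s' then 1 else 0)) = real c"
      unfolding c_def cV by (rule card_filter_real[OF fV, symmetric])
    finally have eq: "(\<Sum>j\<in>V. (if Sd j (Suc h) = s' then 1 else 0) - pmf (P h (Sd j h) (Ad j h)) s') = real c - real n * kern P h s a s'" .
    have "- sqrt (real n * Z) \<le> real c - real n * kern P h s a s'"
      using nb np eq unfolding n_def V_def Z_def by simp
    then have "- (real n * sqrt (Z / real n)) \<le> real c - real n * kern P h s a s'"
      using sqrt_id[of "real n" Z] np Z1 by (simp add: Z_def)
    then have "real n * (kern P h s a s' - sqrt (Z / real n)) \<le> real c" by (simp add: algebra_simps)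
    then have "kern P h s a s' - sqrt (Z / real n) \<le> real c / real n"
      using np by (simp add: field_simps)
    then show ?thesis using be ph np by (simp add: max_def)
  qed
qed

lemma cond_good:
  fixes Sd :: "nat \<Rightarrow> nat \<Rightarrow> 's::finite" and Ad :: "nat \<Rightarrow> nat \<Rightarrow> 'a::finite"
  assumes b0: "0 \<le> beta H K \<delta> Sd Ad k h s a"
    and gP: "\<forall>s'. kern P h s a s' - beta H K \<delta> Sd Ad k h s a \<le> Phat Sd Ad k h s a s'"
    and gr: "r h s a - beta H K \<delta> Sd Ad k h s a \<le> ghat Rd Sd Ad k h s a"
  shows "real H * (\<Sum>s'\<in>UNIV. max 0 (kern P h s a s' - Phat Sd Ad k h s a s'))
     \<le> rtilde H K \<delta> Sd Ad Rd k h s a - r h s a"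
proof -
  define \<beta> where "\<beta> = beta H K \<delta> Sd Ad k h s a"
  have "(\<Sum>s'\<in>UNIV. max 0 (kern P h s a s' - Phat Sd Ad k h s a s')) \<le> (\<Sum>s'\<in>(UNIV::'s set). \<beta>)"
  proof (intro sum_mono)
    fix s'
    have "kern P h s a s' - \<beta> \<le> Phat Sd Ad k h s a s'" using gP by (simp add: \<beta>_def)
    then show "max 0 (kern P h s a s' - Phat Sd Ad k h s a s') \<le> \<beta>" using b0 by (simp add: \<beta>_def)
  qed
  also have "\<dots> = real CARD('s) * \<beta>" by simp
  finally have "real H * (\<Sum>s'\<in>UNIV. max 0 (kern P h s a s' - Phat Sd Ad k h s a s')) \<le> real H * (real CARD('s) * \<beta>)"
    by (intro mult_left_mono) auto
  moreover have "rtilde H K \<delta> Sd Ad Rd k h s a - r h s a = ghat Rd Sd Ad k h s a - r h s a + (1 + real H * real CARD('s)) * \<beta>"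
    unfolding rtilde_def \<beta>_def by simp
  ultimately show ?thesis using gr unfolding \<beta>_def[symmetric] by (simp add: algebra_simps)
qed




theorem lemma5p8:
  fixes M :: "'x measure"
    and S :: "nat \<Rightarrow> nat \<Rightarrow> 'x \<Rightarrow> 's::finite"
    and A :: "nat \<Rightarrow> nat \<Rightarrow> 'x \<Rightarrow> 'a::finite"
    and R Cst :: "nat \<Rightarrow> nat \<Rightarrow> 'x \<Rightarrow> real"
    and pol :: "nat \<Rightarrow> 'x \<Rightarrow> ('s, 'a) policy"
    and P :: "nat \<Rightarrow> 's \<Rightarrow> 'a \<Rightarrow> 's pmf"
    and r c :: "nat \<Rightarrow> 's \<Rightarrow> 'a \<Rightarrow> real"
    and \<mu> :: "'s pmf"
    and H K :: nat
    and \<tau> c0 \<delta> :: real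
    and pstar :: "nat \<Rightarrow> ('s, 'a) policy"
  assumes M: "prob_space M"
    and H: "1 \<le> H" and K: "1 \<le> K"
    and tau: "0 < \<tau>" "\<tau> \<le> real H"
    and delta: "0 < \<delta>" "\<delta> < 1"
    and r_range: "\<forall>h\<in>{1..H}. \<forall>s a. 0 \<le> r h s a \<and> r h s a \<le> 1"
    and c_range: "\<forall>h\<in>{1..H}. \<forall>s a. 0 \<le> c h s a \<and> c h s a \<le> 1"
    and pi0: "\<exists>\<pi>0. V1 H \<pi>0 c (kern P) \<mu> = c0" and c0: "c0 < \<tau>"
    and meas_S: "\<forall>k h. S k h \<in> M \<rightarrow>\<^sub>M count_space UNIV"
    and meas_A: "\<forall>k h. A k h \<in> M \<rightarrow>\<^sub>M count_space UNIV"
    and meas_R: "\<forall>k h. R k h \<in> borel_measurable M"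
    and meas_C: "\<forall>k h. Cst k h \<in> borel_measurable M"
    and pol_adapted: "\<forall>k h s a. (\<lambda>\<omega>. pmf (pol k \<omega> h s) a)
                         \<in> borel_measurable (hist_sigma M H S A R Cst k 0)"
    and init: "\<forall>k\<in>{1..K}. \<forall>s. AE \<omega> in M.
        real_cond_exp M (hist_sigma M H S A R Cst k (opos 1 OS))
          (indicator {\<omega>\<in>space M. S k 1 \<omega> = s}) \<omega> = pmf \<mu> s"
    and act: "\<forall>k\<in>{1..K}. \<forall>h\<in>{1..H}. \<forall>a. AE \<omega> in M.
        real_cond_exp M (hist_sigma M H S A R Cst k (opos h OA))
          (indicator {\<omega>\<in>space M. A k h \<omega> = a}) \<omega> = pmf (pol k \<omega> h (S k h \<omega>)) a"
    and rew_noise: "\<forall>k\<in>{1..K}. \<forall>h\<in>{1..H}.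
        integrable M (\<lambda>\<omega>. R k h \<omega> - r h (S k h \<omega>) (A k h \<omega>))
        \<and> (AE \<omega> in M. real_cond_exp M (hist_sigma M H S A R Cst k (opos h OR))
               (\<lambda>\<omega>. R k h \<omega> - r h (S k h \<omega>) (A k h \<omega>)) \<omega> = 0)
        \<and> (\<forall>l::real. AE \<omega> in M. nn_cond_exp M (hist_sigma M H S A R Cst k (opos h OR))
               (\<lambda>\<omega>. ennreal (exp (l * (R k h \<omega> - r h (S k h \<omega>) (A k h \<omega>))))) \<omega>
             \<le> ennreal (exp (l\<^sup>2 / 4)))"
    and cost_noise: "\<forall>k\<in>{1..K}. \<forall>h\<in>{1..H}.
        integrable M (\<lambda>\<omega>. Cst k h \<omega> - c h (S k h \<omega>) (A k h \<omega>))
        \<and> (AE \<omega> in M. real_cond_exp M (hist_sigma M H S A R Cst k (opos h OC))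
               (\<lambda>\<omega>. Cst k h \<omega> - c h (S k h \<omega>) (A k h \<omega>)) \<omega> = 0)
        \<and> (\<forall>l::real. AE \<omega> in M. nn_cond_exp M (hist_sigma M H S A R Cst k (opos h OC))
               (\<lambda>\<omega>. ennreal (exp (l * (Cst k h \<omega> - c h (S k h \<omega>) (A k h \<omega>))))) \<omega>
             \<le> ennreal (exp (l\<^sup>2 / 4)))"
    and trans: "\<forall>k\<in>{1..K}. \<forall>h\<in>{1..H}. \<forall>s'. AE \<omega> in M.
        real_cond_exp M (hist_sigma M H S A R Cst k (opos (Suc h) OS))
          (indicator {\<omega>\<in>space M. S k (Suc h) \<omega> = s'}) \<omega> = pmf (P h (S k h \<omega>) (A k h \<omega>)) s'"
    and alg: "\<forall>\<omega>\<in>space M. \<forall>k\<in>{1..K}. \<forall>\<pi>.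
        alg_obj H K \<delta> \<tau> c0 (\<lambda>j i. S j i \<omega>) (\<lambda>j i. A j i \<omega>) (\<lambda>j i. R j i \<omega>) (\<lambda>j i. Cst j i \<omega>)
            \<mu> (\<lambda>j. pol j \<omega>) k \<pi>
        \<le> alg_obj H K \<delta> \<tau> c0 (\<lambda>j i. S j i \<omega>) (\<lambda>j i. A j i \<omega>) (\<lambda>j i. R j i \<omega>) (\<lambda>j i. Cst j i \<omega>)
            \<mu> (\<lambda>j. pol j \<omega>) k (pol k \<omega>)"
    and opt: "\<forall>k\<in>{Cpp CARD('s) CARD('a) H \<delta> \<tau> c0..K}.
        V1 H (pstar k) c (kern P) \<mu> + eps CARD('s) CARD('a) H \<delta> k \<le> \<tau>
        \<and> (\<forall>\<pi>. V1 H \<pi> c (kern P) \<mu> + eps CARD('s) CARD('a) H \<delta> k \<le> \<tau>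
               \<longrightarrow> V1 H \<pi> r (kern P) \<mu> \<le> V1 H (pstar k) r (kern P) \<mu>)"
  shows "measure M {\<omega>\<in>space M.
           (\<Sum>k\<in>{Cpp CARD('s) CARD('a) H \<delta> \<tau> c0..K}.
              V1 H (pstar k) r (kern P) \<mu>
              - Vr_hat H K \<delta> (\<lambda>j i. S j i \<omega>) (\<lambda>j i. A j i \<omega>) (\<lambda>j i. R j i \<omega>) \<mu> k (pstar k)) \<le> 0}
         \<ge> 1 - \<delta>"
proof -
  interpret prob_space M by (fact M)
  define Z where "Z = ln (16 * real CARD('s)^2 * real CARD('a) * real H * real K / \<delta>)"
  define D where "D = 16 * real CARD('s)^2 * real CARD('a) * real H * real K"
  have cs: "1 \<le> real CARD('s)" "1 \<le> real CARD('a)" by (simp_all add: Suc_le_eq)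
  have D16: "16 \<le> D" unfolding D_def using cs H K
    by (simp add: mult_ge1_I)
  have Dpos: "0 < D" using D16 by simp
  have ZD: "Z = ln (D / \<delta>)" unfolding Z_def D_def ..
  have D\<delta>: "16 \<le> D / \<delta>"
  proof -
    have "D \<le> D / \<delta>" using delta Dpos by (simp add: field_simps)
    then show ?thesis using D16 by simp
  qed
  have Z1: "1 \<le> Z"
  proof -
    have "exp 1 \<le> D / \<delta>" using exp_le D\<delta> by simp
    then show ?thesis unfolding ZD using D\<delta> by (subst ln_ge_iff) auto
  qed
  have Zpos: "0 < Z" using Z1 by simp
  have expZ: "exp (-Z) = \<delta> / D"
    unfolding ZD using D\<delta> delta Dpos by (simp add: exp_minus exp_ln)
  define ER where "ER h s a n = {\<omega>\<in>space M. \<exists>k\<in>{1..K}. card {j\<in>{1..<k}. S j h \<omega> = s \<and> A j h \<omega> = a} = n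
            \<and> (\<Sum>j\<in>{j\<in>{1..<k}. S j h \<omega> = s \<and> A j h \<omega> = a}. R j h \<omega> - r h (S j h \<omega>) (A j h \<omega>)) < - sqrt (real n * Z)}"
    for h s a n
  define ET where "ET h s a s' n = {\<omega>\<in>space M. \<exists>k\<in>{1..K}. card {j\<in>{1..<k}. S j h \<omega> = s \<and> A j h \<omega> = a} = n
            \<and> (\<Sum>j\<in>{j\<in>{1..<k}. S j h \<omega> = s \<and> A j h \<omega> = a}.
                 (if S j (Suc h) \<omega> = s' then 1 else 0) - pmf (P h (S j h \<omega>) (A j h \<omega>)) s') < - sqrt (real n * Z)}"
    for h s a s' n
  define BR where "BR h s a n = (SOME B. B \<in> sets M \<and> ER h s a n \<subseteq> B \<and> measure M B \<le> exp (-Z))" for h s a n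
  define BT where "BT h s a s' n = (SOME B. B \<in> sets M \<and> ET h s a s' n \<subseteq> B \<and> measure M B \<le> exp (-Z))" for h s a s' n
  have BRp: "BR h s a n \<in> sets M \<and> ER h s a n \<subseteq> BR h s a n \<and> measure M (BR h s a n) \<le> exp (-Z)"
    if "h \<in> {1..H}" "n \<in> {1..K}" for h s a n
  proof -
    have "\<exists>B\<in>sets M. ER h s a n \<subseteq> B \<and> measure M B \<le> exp (-Z)"
      unfolding ER_def by (rule reward_bad[OF M meas_S meas_A meas_R meas_C rew_noise]) (use that Zpos in auto)
    then show ?thesis unfolding BR_def by (rule someI2_bex) blast
  qed
  have BTp: "BT h s a s' n \<in> sets M \<and> ET h s a s' n \<subseteq> BT h s a s' n \<and> measure M (BT h s a s' n) \<le> exp (-Z)"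
    if "h \<in> {1..H}" "n \<in> {1..K}" for h s a s' n
  proof -
    have "\<exists>B\<in>sets M. ET h s a s' n \<subseteq> B \<and> measure M B \<le> exp (-Z)"
      unfolding ET_def by (rule trans_bad[OF M meas_S meas_A meas_R meas_C trans]) (use that Zpos in auto)
    then show ?thesis unfolding BT_def by (rule someI2_bex) blast
  qed
  define IR where "IR = {1..H} \<times> (UNIV::'s set) \<times> (UNIV::'a set) \<times> {1..K}"
  define IT where "IT = {1..H} \<times> (UNIV::'s set) \<times> (UNIV::'a set) \<times> (UNIV::'s set) \<times> {1..K}"
  define BR' where "BR' = (\<lambda>(h,s,a,n). BR h s a n)"
  define BT' where "BT' = (\<lambda>(h,s,a,s',n). BT h s a s' n)"
  define U where "U = (\<Union>i\<in>IR. BR' i) \<union> (\<Union>i\<in>IT. BT' i)"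
  have fIR: "finite IR" unfolding IR_def by simp
  have fIT: "finite IT" unfolding IT_def by simp
  have BR'p: "BR' i \<in> sets M \<and> measure M (BR' i) \<le> exp (-Z)" if "i \<in> IR" for i
    using that BRp unfolding IR_def BR'_def by auto
  have BT'p: "BT' i \<in> sets M \<and> measure M (BT' i) \<le> exp (-Z)" if "i \<in> IT" for i
    using that BTp unfolding IT_def BT'_def by auto
  have U1: "(\<Union>i\<in>IR. BR' i) \<in> sets M" using BR'p fIR by blast
  have U2: "(\<Union>i\<in>IT. BT' i) \<in> sets M" using BT'p fIT by blast
  have UM: "U \<in> sets M" unfolding U_def using U1 U2 by blast
  have m1: "measure M (\<Union>i\<in>IR. BR' i) \<le> real (card IR) * exp (-Z)"
  proof -
    have "measure M (\<Union>i\<in>IR. BR' i) \<le> (\<Sum>i\<in>IR. measure M (BR' i))"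
      using BR'p fIR by (intro finite_measure_subadditive_finite) auto
    also have "\<dots> \<le> real (card IR) * exp (-Z)"
      using BR'p by (intro sum_bounded_above) auto
    finally show ?thesis .
  qed
  have m2: "measure M (\<Union>i\<in>IT. BT' i) \<le> real (card IT) * exp (-Z)"
  proof -
    have "measure M (\<Union>i\<in>IT. BT' i) \<le> (\<Sum>i\<in>IT. measure M (BT' i))"
      using BT'p fIT by (intro finite_measure_subadditive_finite) auto
    also have "\<dots> \<le> real (card IT) * exp (-Z)"
      using BT'p by (intro sum_bounded_above) auto
    finally show ?thesis .
  qed
  have cIR: "real (card IR) = real H * real CARD('s) * real CARD('a) * real K"
    unfolding IR_def by (simp add: card_cartesian_product)
  have cIT: "real (card IT) = real H * real CARD('s) * real CARD('a) * real CARD('s) * real K"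
    unfolding IT_def by (simp add: card_cartesian_product)
  have mU: "measure M U \<le> \<delta>"
  proof -
    have "measure M U \<le> measure M (\<Union>i\<in>IR. BR' i) + measure M (\<Union>i\<in>IT. BT' i)"
      unfolding U_def using U1 U2 by (rule measure_Un_le)
    also have "\<dots> \<le> real (card IR) * exp (-Z) + real (card IT) * exp (-Z)" using m1 m2 by simp
    also have "\<dots> = (real H * real CARD('s) * real CARD('a) * real K) * (1 + real CARD('s)) * (\<delta> / D)"
      unfolding cIR cIT expZ by (simp add: algebra_simps)
    also have "\<dots> \<le> \<delta>"
    proof -
      define q where "q = real H * real CARD('s) * real CARD('a) * real K"
      have qpos: "0 < q" unfolding q_def using H K cs by simp
      have Dq: "D = 16 * real CARD('s) * q" unfolding D_def q_def by (simp add: power2_eq_square)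
      have "1 + real CARD('s) \<le> 16 * real CARD('s)" using cs by linarith
      then have "q * (1 + real CARD('s)) \<le> q * (16 * real CARD('s))" using qpos by (intro mult_left_mono) auto
      then have "q * (1 + real CARD('s)) \<le> D" unfolding Dq by (simp add: algebra_simps)
      then have "q * (1 + real CARD('s)) / D \<le> 1" using Dpos by simp
      then have "q * (1 + real CARD('s)) / D * \<delta> \<le> 1 * \<delta>" using delta by (intro mult_right_mono) auto
      then show ?thesis unfolding q_def[symmetric] by (simp add: field_simps)
    qed
    finally show ?thesis .
  qed
  define T where "T = {\<omega>\<in>space M.
           (\<Sum>k\<in>{Cpp CARD('s) CARD('a) H \<delta> \<tau> c0..K}.
              V1 H (pstar k) r (kern P) \<mu>
              - Vr_hat H K \<delta> (\<lambda>j i. S j i \<omega>) (\<lambda>j i. A j i \<omega>) (\<lambda>j i. R j i \<omega>) \<mu> k (pstar k)) \<le> 0}"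
  have TM: "T \<in> sets M"
  proof -
    have [measurable]: "(\<lambda>\<omega>. Vr_hat H K \<delta> (\<lambda>j i. S j i \<omega>) (\<lambda>j i. A j i \<omega>) (\<lambda>j i. R j i \<omega>) \<mu> k (pstar k)) \<in> borel_measurable M" for k
      by (rule vr_hat_meas[OF meas_S meas_A meas_R])
    show ?thesis unfolding T_def by measurable
  qed
  have ZZ: "ln (16 * real CARD('s)^2 * real CARD('a) * real H * real K / \<delta>) = Z" unfolding Z_def ..
  have sub: "space M - U \<subseteq> T"
  proof
    fix \<omega> assume "\<omega> \<in> space M - U"
    then have \<omega>: "\<omega> \<in> space M" "\<omega> \<notin> U" by auto
    have key: "V1 H (pstar k) r (kern P) \<mu> \<le> Vr_hat H K \<delta> (\<lambda>j i. S j i \<omega>) (\<lambda>j i. A j i \<omega>) (\<lambda>j i. R j i \<omega>) \<mu> k (pstar k)"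
      if k: "k \<in> {Cpp CARD('s) CARD('a) H \<delta> \<tau> c0..K}" for k
    proof -
      have kK: "k \<le> K" using k by auto
      have nK: "card {j\<in>{1..<k}. S j h \<omega> = s \<and> A j h \<omega> = a} \<le> K" for h s a
      proof -
        have "card {j\<in>{1..<k}. S j h \<omega> = s \<and> A j h \<omega> = a} \<le> card {1..<k}" by (intro card_mono) auto
        then show ?thesis using kK by simp
      qed
      have k1: "k \<in> {1..K}" if "1 \<le> card {j\<in>{1..<k}. S j h \<omega> = s \<and> A j h \<omega> = a}" for h s a
      proof -
        have "k \<noteq> 0" using that by (cases "k = 0") auto
        then show ?thesis using kK by auto
      qed
      have gr: "r h s a - beta H K \<delta> (\<lambda>j i. S j i \<omega>) (\<lambda>j i. A j i \<omega>) k h s a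
          \<le> ghat (\<lambda>j i. R j i \<omega>) (\<lambda>j i. S j i \<omega>) (\<lambda>j i. A j i \<omega>) k h s a" if h: "h \<in> {1..H}" for h s a
      proof (rule good_r)
        show "1 \<le> ln (16 * real CARD('s)^2 * real CARD('a) * real H * real K / \<delta>)" using Z1 ZZ by simp
        show "r h s a \<le> 1" using r_range h by auto
        assume c1: "1 \<le> card {j\<in>{1..<k}. S j h \<omega> = s \<and> A j h \<omega> = a}"
        define n where "n = card {j\<in>{1..<k}. S j h \<omega> = s \<and> A j h \<omega> = a}"
        show "- sqrt (real (card {j\<in>{1..<k}. S j h \<omega> = s \<and> A j h \<omega> = a}) * ln (16 * real CARD('s)^2 * real CARD('a) * real H * real K / \<delta>))
          \<le> (\<Sum>j\<in>{j\<in>{1..<k}. S j h \<omega> = s \<and> A j h \<omega> = a}. R j h \<omega> - r h (S j h \<omega>) (A j h \<omega>))"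
        proof (rule ccontr)
          assume "\<not> ?thesis"
          then have lt: "(\<Sum>j\<in>{j\<in>{1..<k}. S j h \<omega> = s \<and> A j h \<omega> = a}. R j h \<omega> - r h (S j h \<omega>) (A j h \<omega>)) < - sqrt (real n * Z)"
            unfolding ZZ n_def by simp
          have "\<omega> \<in> ER h s a n" unfolding ER_def using \<omega>(1) k1[OF c1] lt n_def by blast
          moreover have nI: "n \<in> {1..K}" using c1 nK n_def by auto
          ultimately have "\<omega> \<in> BR h s a n" using BRp[OF h nI] by blast
          moreover have "(h, s, a, n) \<in> IR" unfolding IR_def using h nI by auto
          ultimately have "\<omega> \<in> U" unfolding U_def BR'_def by force
          then show False using \<omega>(2) by simp
        qed
      qed
      have gP: "kern P h s a s' - beta H K \<delta> (\<lambda>j i. S j i \<omega>) (\<lambda>j i. A j i \<omega>) k h s a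
          \<le> Phat (\<lambda>j i. S j i \<omega>) (\<lambda>j i. A j i \<omega>) k h s a s'" if h: "h \<in> {1..H}" for h s a s'
      proof (rule good_P)
        show "1 \<le> ln (16 * real CARD('s)^2 * real CARD('a) * real H * real K / \<delta>)" using Z1 ZZ by simp
        assume c1: "1 \<le> card {j\<in>{1..<k}. S j h \<omega> = s \<and> A j h \<omega> = a}"
        define n where "n = card {j\<in>{1..<k}. S j h \<omega> = s \<and> A j h \<omega> = a}"
        show "- sqrt (real (card {j\<in>{1..<k}. S j h \<omega> = s \<and> A j h \<omega> = a}) * ln (16 * real CARD('s)^2 * real CARD('a) * real H * real K / \<delta>))
          \<le> (\<Sum>j\<in>{j\<in>{1..<k}. S j h \<omega> = s \<and> A j h \<omega> = a}. (if S j (Suc h) \<omega> = s' then 1 else 0) - pmf (P h (S j h \<omega>) (A j h \<omega>)) s')"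
        proof (rule ccontr)
          assume "\<not> ?thesis"
          then have lt: "(\<Sum>j\<in>{j\<in>{1..<k}. S j h \<omega> = s \<and> A j h \<omega> = a}. (if S j (Suc h) \<omega> = s' then 1 else 0) - pmf (P h (S j h \<omega>) (A j h \<omega>)) s') < - sqrt (real n * Z)"
            unfolding ZZ n_def by simp
          have "\<omega> \<in> ET h s a s' n" unfolding ET_def using \<omega>(1) k1[OF c1] lt n_def by blast
          moreover have nI: "n \<in> {1..K}" using c1 nK n_def by auto
          ultimately have "\<omega> \<in> BT h s a s' n" using BTp[OF h nI] by blast
          moreover have "(h, s, a, s', n) \<in> IT" unfolding IT_def using h nI by auto
          ultimately have "\<omega> \<in> U" unfolding U_def BT'_def by force
          then show False using \<omega>(2) by simp
        qed
      qed
      have b0: "0 \<le> beta H K \<delta> (\<lambda>j i. S j i \<omega>) (\<lambda>j i. A j i \<omega>) k h s a" for h s a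
        unfolding beta_def using Z1 ZZ by simp
      show ?thesis unfolding Vr_hat_def
      proof (rule opt_V1)
        show "\<forall>h\<in>{1..H}. \<forall>s a. 0 \<le> r h s a \<and> r h s a \<le> 1" by fact
        show "\<forall>h s a s'. 0 \<le> Phat (\<lambda>j i. S j i \<omega>) (\<lambda>j i. A j i \<omega>) k h s a s'"
          by (simp add: Phat_def)
        show "\<forall>h\<in>{1..H}. \<forall>s a. real H * (\<Sum>s'\<in>UNIV. max 0 (kern P h s a s' - Phat (\<lambda>j i. S j i \<omega>) (\<lambda>j i. A j i \<omega>) k h s a s'))
            \<le> rtilde H K \<delta> (\<lambda>j i. S j i \<omega>) (\<lambda>j i. A j i \<omega>) (\<lambda>j i. R j i \<omega>) k h s a - r h s a"
          using cond_good[OF b0] gP gr by blast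
      qed
    qed
    have "(\<Sum>k\<in>{Cpp CARD('s) CARD('a) H \<delta> \<tau> c0..K}.
              V1 H (pstar k) r (kern P) \<mu>
              - Vr_hat H K \<delta> (\<lambda>j i. S j i \<omega>) (\<lambda>j i. A j i \<omega>) (\<lambda>j i. R j i \<omega>) \<mu> k (pstar k)) \<le> 0"
      using key by (intro sum_nonpos) auto
    then show "\<omega> \<in> T" unfolding T_def using \<omega> by simp
  qed
  have "1 - \<delta> \<le> 1 - measure M U" using mU by simp
  also have "\<dots> = measure M (space M - U)" using UM by (simp add: prob_compl)
  also have "\<dots> \<le> measure M T" using sub TM by (rule finite_measure_mono)
  finally show ?thesis unfolding T_def .
qed


end
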